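(* Let $X,Y$ be real-valued random variables on an atomless probability space $(\Omega,\mathcal F,\mathbb P)$ (no integrability assumed). The following are equivalent: (i) $X\le_{\rm cx} Y$; (ii) for all $p\in(0,1)$, $$\int_0^p F_X^{-1}(t)\,\mathrm dt \ge \int_0^p F_Y^{-1}(t)\,\mathrm dt \quad\text{and}\quad \int_p^1 F_X^{-1}(t)\,\mathrm dt \le \int_p^1 F_Y^{-1}(t)\,\mathrm dt;$$ (iii) for all $w\in\mathbb R$, $$\mathbb E[(X-w)_-]\le \mathbb E[(Y-w)_-]\quad\text{and}\quad \mathbb E[(X-w)_+]\le \mathbb E[(Y-w)_+].$$
   Context: For $x\in\mathbb R$, $x_+=\max\{x,0\}$ and $x_-=\max\{-x,0\}$. An expectation $\mathbb E[Z]$ is called well-defined if $\mathbb E[Z_+]<\infty$ or $\mathbb E[Z_-]<\infty$ (it may then equal $\pm\infty$). $\mathcal U_{\rm cx}$ denotes the set of all convex functions $\mathbb R\to\mathbb R$. We write $X\le_{\rm cx}Y$ if $\mathbb E[u(X)]\le\mathbb E[u(Y)]$ for all $u\in\mathcal U_{\rm cx}$ such that both expectations are well-defined. $F_X^{-1}(t)=\inf\{x\in\mathbb R:\mathbb P(X\le x)\ge t\}$, $t\in(0,1)$, is the left quantile function. The integrals and expectations in (ii) and (iii) are always well-defined, possibly infinite, with values in $[-\infty,\infty]$. *)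

theory Defs
  imports "HOL-Probability.Probability"
begin

definition atomless :: "'a measure \<Rightarrow> bool" where
  "atomless M \<longleftrightarrow> (\<forall>A\<in>sets M. emeasure M A > 0 \<longrightarrow>
      (\<exists>B\<in>sets M. B \<subseteq> A \<and> 0 < emeasure M B \<and> emeasure M B < emeasure M A))"

definition pos_part :: "real \<Rightarrow> real" where "pos_part x = max x 0"
definition neg_part :: "real \<Rightarrow> real" where "neg_part x = max (- x) 0"

definition ext_expectation :: "'a measure \<Rightarrow> ('a \<Rightarrow> real) \<Rightarrow> ereal" where
  "ext_expectation M Z =
     enn2ereal (\<integral>\<^sup>+ \<omega>. ennreal (pos_part (Z \<omega>)) \<partial>M)
   - enn2ereal (\<integral>\<^sup>+ \<omega>. ennreal (neg_part (Z \<omega>)) \<partial>M)"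

definition expectation_well_defined :: "'a measure \<Rightarrow> ('a \<Rightarrow> real) \<Rightarrow> bool" where
  "expectation_well_defined M Z \<longleftrightarrow>
     (\<integral>\<^sup>+ \<omega>. ennreal (pos_part (Z \<omega>)) \<partial>M) < \<infinity> \<or>
     (\<integral>\<^sup>+ \<omega>. ennreal (neg_part (Z \<omega>)) \<partial>M) < \<infinity>"

definition cx_le :: "'a measure \<Rightarrow> ('a \<Rightarrow> real) \<Rightarrow> ('a \<Rightarrow> real) \<Rightarrow> bool" where
  "cx_le M X Y \<longleftrightarrow> (\<forall>u :: real \<Rightarrow> real. convex_on UNIV u \<longrightarrow>
      expectation_well_defined M (\<lambda>\<omega>. u (X \<omega>)) \<longrightarrow>
      expectation_well_defined M (\<lambda>\<omega>. u (Y \<omega>)) \<longrightarrow>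
      ext_expectation M (\<lambda>\<omega>. u (X \<omega>)) \<le> ext_expectation M (\<lambda>\<omega>. u (Y \<omega>)))"

definition left_quantile :: "'a measure \<Rightarrow> ('a \<Rightarrow> real) \<Rightarrow> real \<Rightarrow> real" where
  "left_quantile M X t = Inf {x. measure M {\<omega> \<in> space M. X \<omega> \<le> x} \<ge> t}"

definition ext_set_integral :: "real set \<Rightarrow> (real \<Rightarrow> real) \<Rightarrow> ereal" where
  "ext_set_integral S f =
     enn2ereal (\<integral>\<^sup>+ t. ennreal (pos_part (f t)) * indicator S t \<partial>lborel)
   - enn2ereal (\<integral>\<^sup>+ t. ennreal (neg_part (f t)) * indicator S t \<partial>lborel)"

end

theory Submission
  imports Defs
begin

lemma cvx3:
  fixes f :: "real \<Rightarrow> real"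
  assumes f: "convex_on UNIV f" and uv: "u \<le> v" and vy: "v \<le> y"
  shows "f v * (y - u) \<le> (y - v) * f u + (v - u) * f y"
proof (cases "u < y")
  case True
  have c: "convex_on {u..y} f" using convex_on_subset[OF f] by auto
  have "f v \<le> (f y - f u) / (y - u) * (v - u) + f u"
    using convex_onD_Icc'[OF c, of v] uv vy by simp
  then have "f v * (y - u) \<le> ((f y - f u) / (y - u) * (v - u) + f u) * (y - u)"
    using True by (intro mult_right_mono) auto
  also have "\<dots> = (y - v) * f u + (v - u) * f y" using True by (simp add: field_simps)
  finally show ?thesis .
next
  case False
  then have "u = v" "v = y" using uv vy by auto
  then show ?thesis by simp
qed

lemma pos_part_nonneg[simp]: "pos_part x \<ge> 0" by (simp add: pos_part_def)
lemma neg_part_nonneg[simp]: "neg_part x \<ge> 0" by (simp add: neg_part_def)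

lemma abel_sum:
  fixes s H :: "nat \<Rightarrow> real"
  shows "(\<Sum>k<Suc N. (s k - (if k = 0 then 0 else s (k - 1))) * H (Suc k)) =
         (\<Sum>k<N. s k * (H (Suc k) - H (Suc (Suc k)))) + s N * H (Suc N)"
proof (induction N)
  case 0 then show ?case by simp
next
  case (Suc N)
  show ?case using Suc by (simp add: algebra_simps)
qed

definition grid :: "real \<Rightarrow> real \<Rightarrow> nat \<Rightarrow> real" where
  "grid a h k = a + real k * h"
definition sl :: "(real\<Rightarrow>real) \<Rightarrow> real \<Rightarrow> real \<Rightarrow> nat \<Rightarrow> real" where
  "sl f a h k = (f (grid a h (Suc k)) - f (grid a h k)) / h"
definition dl :: "(real\<Rightarrow>real) \<Rightarrow> real \<Rightarrow> real \<Rightarrow> nat \<Rightarrow> real" where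
  "dl f a h k = sl f a h k - (if k = 0 then 0 else sl f a h (k - 1))"
definition happ :: "(real\<Rightarrow>real) \<Rightarrow> real \<Rightarrow> real \<Rightarrow> real \<Rightarrow> nat \<Rightarrow> real \<Rightarrow> real" where
  "happ f c a h N x = c + (\<Sum>k<Suc N. dl f a h k * pos_part (x - grid a h (Suc k)))"

context
  fixes f :: "real \<Rightarrow> real" and a h :: real
  assumes cvx: "convex_on UNIV f" and mono: "mono f" and hpos: "h > 0"
begin

lemma grid_Suc: "grid a h (Suc k) = grid a h k + h"
  by (simp add: grid_def algebra_simps)

lemma sl_nonneg: "sl f a h k \<ge> 0"
  using mono hpos unfolding sl_def
  by (auto intro!: divide_nonneg_pos simp: grid_Suc monoD)

lemma sl_mono_step: "sl f a h k \<le> sl f a h (Suc k)"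
proof -
  let ?u = "grid a h k" let ?v = "grid a h (Suc k)" let ?y = "grid a h (Suc (Suc k))"
  have "f ?v * (?y - ?u) \<le> (?y - ?v) * f ?u + (?v - ?u) * f ?y"
    by (rule cvx3[OF cvx]) (use hpos in \<open>auto simp: grid_Suc\<close>)
  then have "f ?v * (2*h) \<le> h * f ?u + h * f ?y" by (simp add: grid_Suc algebra_simps)
  then have "h * (2 * f ?v) \<le> h * (f ?u + f ?y)" by (simp add: algebra_simps)
  then have "2 * f ?v \<le> f ?u + f ?y" using hpos by (simp add: mult_le_cancel_left_pos)
  then have "f ?v - f ?u \<le> f ?y - f ?v" by simp
  then show ?thesis unfolding sl_def using hpos by (simp add: divide_right_mono)
qed

lemma dl_nonneg: "dl f a h k \<ge> 0"
  using sl_nonneg[of 0] sl_mono_step[of "k - 1"] by (cases k) (auto simp: dl_def)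

lemma happ_clamp: "happ f c a h N x = c + (\<Sum>k<N. sl f a h k *
   (pos_part (x - grid a h (Suc k)) - pos_part (x - grid a h (Suc (Suc k)))))
   + sl f a h N * pos_part (x - grid a h (Suc N))"
  unfolding happ_def dl_def using abel_sum[of "sl f a h" "\<lambda>i. pos_part (x - grid a h i)" N]
  by simp

lemma term_upper: "sl f a h k * (pos_part (x - grid a h (Suc k)) - pos_part (x - grid a h (Suc (Suc k))))
   \<le> f (min x (grid a h (Suc (Suc k)))) - f (min x (grid a h (Suc k)))"
proof -
  define u where "u = grid a h k"
  have v: "grid a h (Suc k) = u + h" and y: "grid a h (Suc (Suc k)) = u + h + h"
    by (simp_all add: u_def grid_Suc)
  have s: "sl f a h k = (f (u+h) - f u) / h" by (simp add: sl_def v u_def)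
  show ?thesis
  proof (cases "x \<le> u + h")
    case True then show ?thesis using hpos by (simp add: pos_part_def v y s min_def max_def)
  next
    case False
    show ?thesis
    proof (cases "x \<le> u + h + h")
      case True
      have "f (u+h) * (x - u) \<le> (x - (u+h)) * f u + (u + h - u) * f x"
        by (rule cvx3[OF cvx]) (use False hpos in auto)
      then have "(f (u+h) - f u) * (x - (u+h)) \<le> h * (f x - f (u+h))" by (simp add: algebra_simps)
      then have "(f (u+h) - f u) / h * (x - (u+h)) \<le> f x - f (u+h)" using hpos
        by (simp add: field_simps)
      then show ?thesis using True False by (simp add: pos_part_def v y s)
    next
      case False2: False
      have "f (u+h) * (u+h+h - u) \<le> (u+h+h - (u+h)) * f u + (u + h - u) * f (u+h+h)"
        by (rule cvx3[OF cvx]) (use hpos in auto)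
      then have "(f (u+h) - f u) / h * h \<le> f (u+h+h) - f (u+h)" using hpos
        by (simp add: field_simps)
      moreover have "x - (u+h) - (x - (u+h+h)) = h" by simp
      ultimately show ?thesis using False False2 hpos by (simp add: pos_part_def v y s)
    qed
  qed
qed

lemma term_lower: "sl f a h k * (pos_part (x - grid a h (Suc k)) - pos_part (x - grid a h (Suc (Suc k))))
   \<ge> f (min (x - h) (grid a h (Suc k))) - f (min (x - h) (grid a h k))"
proof -
  define u where "u = grid a h k"
  have v: "grid a h (Suc k) = u + h" and y: "grid a h (Suc (Suc k)) = u + h + h"
    by (simp_all add: u_def grid_Suc)
  have s: "sl f a h k = (f (u+h) - f u) / h" by (simp add: sl_def v u_def)
  show ?thesis
  proof (cases "x \<le> u + h")
    case True then show ?thesis using hpos by (simp add: pos_part_def v y s min_def max_def u_def[symmetric])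
  next
    case False
    show ?thesis
    proof (cases "x \<le> u + h + h")
      case True
      have "f (x - h) * (u + h - u) \<le> (u + h - (x - h)) * f u + ((x - h) - u) * f (u + h)"
        by (rule cvx3[OF cvx]) (use False True in auto)
      then have "h * (f (x - h) - f u) \<le> (x - (u+h)) * (f (u+h) - f u)" by (simp add: algebra_simps)
      then have "f (x - h) - f u \<le> (f (u+h) - f u) / h * (x - (u+h))" using hpos
        by (simp add: field_simps)
      then show ?thesis using True False by (simp add: pos_part_def v y s u_def[symmetric])
    next
      case False2: False
      have "x - (u+h) - (x - (u+h+h)) = h" by simp
      then show ?thesis using False False2 hpos by (simp add: pos_part_def v y s u_def[symmetric] min_def)
    qed
  qed
qed

lemma last_upper: "sl f a h N * pos_part (x - grid a h (Suc N)) \<le> f (max x (grid a h (Suc N))) - f (grid a h (Suc N))"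
proof -
  define u where "u = grid a h N"
  have v: "grid a h (Suc N) = u + h" by (simp add: u_def grid_Suc)
  have s: "sl f a h N = (f (u+h) - f u) / h" by (simp add: sl_def v u_def)
  show ?thesis
  proof (cases "x \<le> u + h")
    case True then show ?thesis using hpos by (simp add: pos_part_def v s min_def max_def)
  next
    case False
    have "f (u+h) * (x - u) \<le> (x - (u+h)) * f u + (u + h - u) * f x"
      by (rule cvx3[OF cvx]) (use False hpos in auto)
    then have "(f (u+h) - f u) * (x - (u+h)) \<le> h * (f x - f (u+h))" by (simp add: algebra_simps)
    then have "(f (u+h) - f u) / h * (x - (u+h)) \<le> f x - f (u+h)" using hpos
      by (simp add: field_simps)
    then show ?thesis using False by (simp add: pos_part_def v s)
  qed
qed

lemma happ_le:
  assumes c: "\<And>z. c \<le> f z"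
  shows "happ f c a h N x \<le> f x"
proof -
  have "(\<Sum>k<N. sl f a h k * (pos_part (x - grid a h (Suc k)) - pos_part (x - grid a h (Suc (Suc k)))))
     \<le> (\<Sum>k<N. f (min x (grid a h (Suc (Suc k)))) - f (min x (grid a h (Suc k))))"
    by (rule sum_mono) (rule term_upper)
  also have "\<dots> = f (min x (grid a h (Suc N))) - f (min x (grid a h 0 + h))"
    using sum_lessThan_telescope[of "\<lambda>i. f (min x (grid a h (Suc i)))" N] by (simp add: grid_Suc)
  finally have S: "(\<Sum>k<N. sl f a h k * (pos_part (x - grid a h (Suc k)) - pos_part (x - grid a h (Suc (Suc k)))))
     \<le> f (min x (grid a h (Suc N))) - f (min x (grid a h 0 + h))" .
  have L: "sl f a h N * pos_part (x - grid a h (Suc N)) \<le> f (max x (grid a h (Suc N))) - f (grid a h (Suc N))"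
    by (rule last_upper)
  have E: "f (min x (grid a h (Suc N))) + f (max x (grid a h (Suc N))) = f x + f (grid a h (Suc N))"
    by (cases "x \<le> grid a h (Suc N)") (auto simp: min_def max_def)
  show ?thesis unfolding happ_clamp using S L E c[of "min x (grid a h 0 + h)"] by linarith
qed

lemma happ_ge:
  assumes c: "c \<ge> 0"
  shows "happ f c a h N x \<ge> c + f (min (x - h) (grid a h N)) - f (min (x - h) a)"
proof -
  have "(\<Sum>k<N. f (min (x - h) (grid a h (Suc k))) - f (min (x - h) (grid a h k)))
     \<le> (\<Sum>k<N. sl f a h k * (pos_part (x - grid a h (Suc k)) - pos_part (x - grid a h (Suc (Suc k)))))"
    by (rule sum_mono) (rule term_lower)
  moreover have "(\<Sum>k<N. f (min (x - h) (grid a h (Suc k))) - f (min (x - h) (grid a h k)))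
     = f (min (x - h) (grid a h N)) - f (min (x - h) a)"
    using sum_lessThan_telescope[of "\<lambda>i. f (min (x - h) (grid a h i))" N] by (simp add: grid_def)
  moreover have "sl f a h N * pos_part (x - grid a h (Suc N)) \<ge> 0"
    using sl_nonneg by simp
  ultimately show ?thesis unfolding happ_clamp by linarith
qed

end

lemma hinge_combo_le:
  fixes M :: "'a measure" and X Y :: "'a \<Rightarrow> real"
  assumes X: "X \<in> borel_measurable M" and Y: "Y \<in> borel_measurable M"
    and H: "\<And>w. (\<integral>\<^sup>+\<omega>. ennreal (pos_part (X \<omega> - w)) \<partial>M) \<le> (\<integral>\<^sup>+\<omega>. ennreal (pos_part (Y \<omega> - w)) \<partial>M)"
    and c: "c \<ge> 0" and d: "\<And>k. d k \<ge> 0"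
  shows "(\<integral>\<^sup>+\<omega>. ennreal (c + (\<Sum>k\<in>K. d k * pos_part (X \<omega> - w k))) \<partial>M)
       \<le> (\<integral>\<^sup>+\<omega>. ennreal (c + (\<Sum>k\<in>K. d k * pos_part (Y \<omega> - w k))) \<partial>M)"
proof -
  have eq: "ennreal (c + (\<Sum>k\<in>K. d k * pos_part (Z - w k))) =
     ennreal c + (\<Sum>k\<in>K. ennreal (d k) * ennreal (pos_part (Z - w k)))" for Z
    using c d by (simp add: ennreal_plus sum_nonneg ennreal_mult[symmetric])
  have pm: "(\<lambda>\<omega>. pos_part (Z \<omega> - v)) \<in> borel_measurable M" if "Z \<in> borel_measurable M" for Z v
    unfolding pos_part_def using that by measurable
  have I: "(\<integral>\<^sup>+\<omega>. ennreal (c + (\<Sum>k\<in>K. d k * pos_part (Z \<omega> - w k))) \<partial>M)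
      = (\<integral>\<^sup>+\<omega>. ennreal c \<partial>M) + (\<Sum>k\<in>K. ennreal (d k) * (\<integral>\<^sup>+\<omega>. ennreal (pos_part (Z \<omega> - w k)) \<partial>M))"
    if Z: "Z \<in> borel_measurable M" for Z
    unfolding eq using pm[OF Z]
    by (subst nn_integral_add) (auto simp: nn_integral_sum nn_integral_cmult)
  show ?thesis unfolding I[OF X] I[OF Y]
    by (intro add_mono order_refl sum_mono mult_left_mono H) auto
qed

lemma K_plus:
  fixes M :: "'a measure" and X Y :: "'a \<Rightarrow> real" and f :: "real \<Rightarrow> real"
  assumes X: "X \<in> borel_measurable M" and Y: "Y \<in> borel_measurable M"
    and H: "\<And>w. (\<integral>\<^sup>+\<omega>. ennreal (pos_part (X \<omega> - w)) \<partial>M) \<le> (\<integral>\<^sup>+\<omega>. ennreal (pos_part (Y \<omega> - w)) \<partial>M)"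
    and cvx: "convex_on UNIV f" and mono: "mono f" and nn: "\<And>x. f x \<ge> 0"
  shows "(\<integral>\<^sup>+\<omega>. ennreal (f (X \<omega>)) \<partial>M) \<le> (\<integral>\<^sup>+\<omega>. ennreal (f (Y \<omega>)) \<partial>M)"
proof -
  define c where "c = (INF n. f (- real (n::nat)))"
  have bdd: "bdd_below (range (\<lambda>n::nat. f (- real n)))" using nn by (intro bdd_belowI[of _ 0]) auto
  have c0: "c \<ge> 0" unfolding c_def using nn by (intro cINF_greatest) auto
  have cle: "c \<le> f z" for z
  proof -
    obtain n :: nat where "real n \<ge> - z" using real_arch_simple by blast
    then have "f (- real n) \<le> f z" by (intro monoD[OF mono]) simp
    moreover have "c \<le> f (- real n)" unfolding c_def by (rule cINF_lower[OF bdd]) simp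
    ultimately show ?thesis by simp
  qed
  have dec: "decseq (\<lambda>n::nat. f (- real n))"
    by (intro decseq_SucI monoD[OF mono]) simp
  have climit: "(\<lambda>n::nat. f (- real n)) \<longlonglongrightarrow> c"
    unfolding c_def by (rule LIMSEQ_decseq_INF[OF bdd dec])
  have cont: "isCont f x" for x
    using convex_on_continuous[OF open_UNIV cvx] by (simp add: continuous_on_eq_continuous_at)
  define hh where "hh n = inverse (real (Suc n))" for n
  define aa where "aa n = - real n" for n
  define NN where "NN n = 2 * n * Suc n" for n
  define g where "g n x = happ f c (aa n) (hh n) (NN n) x" for n x
  have hpos: "hh n > 0" for n unfolding hh_def by simp
  have gridN: "grid (aa n) (hh n) (NN n) = real n" for n
    unfolding grid_def aa_def hh_def NN_def by (simp add: field_simps)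
  have g_le: "g n x \<le> f x" for n x
    unfolding g_def by (rule happ_le[OF cvx mono hpos cle])
  have g_lim: "(\<lambda>n. g n x) \<longlonglongrightarrow> f x" for x
  proof (rule tendsto_sandwich[where f="\<lambda>n. c + f (x - hh n) - f (aa n)"])
    obtain n0 :: nat where n0: "real n0 \<ge> \<bar>x\<bar> + 1" using real_arch_simple by blast
    show "\<forall>\<^sub>F n in sequentially. c + f (x - hh n) - f (aa n) \<le> g n x"
    proof (rule eventually_sequentiallyI[of n0])
      fix n assume n: "n \<ge> n0"
      have "real n \<ge> real n0" using n by simp
      moreover have "hh n \<le> 1" unfolding hh_def by (simp add: field_simps)
      ultimately have "x - hh n \<ge> aa n" "x - hh n \<le> real n" using n0 hpos[of n] unfolding aa_def by linarith+
      then have "min (x - hh n) (grid (aa n) (hh n) (NN n)) = x - hh n" "min (x - hh n) (aa n) = aa n"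
        unfolding gridN by auto
      then show "c + f (x - hh n) - f (aa n) \<le> g n x"
        using happ_ge[where f=f and a="aa n" and h="hh n" and N="NN n" and x=x and c=c, OF cvx mono hpos[of n] c0] unfolding g_def by simp
    qed
    show "\<forall>\<^sub>F n in sequentially. g n x \<le> f x" using g_le by simp
    have "(\<lambda>n. x - hh n) \<longlonglongrightarrow> x - 0"
      unfolding hh_def by (intro tendsto_intros LIMSEQ_inverse_real_of_nat)
    then have "(\<lambda>n. f (x - hh n)) \<longlonglongrightarrow> f x" using cont[of x] isCont_tendsto_compose by fastforce
    then have "(\<lambda>n. c + f (x - hh n) - f (aa n)) \<longlonglongrightarrow> c + f x - c"
      unfolding aa_def by (intro tendsto_intros climit)
    then show "(\<lambda>n. c + f (x - hh n) - f (aa n)) \<longlonglongrightarrow> f x" by simp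
  qed (simp)
  have gform: "g n x = c + (\<Sum>k<Suc (NN n). dl f (aa n) (hh n) k * pos_part (x - grid (aa n) (hh n) (Suc k)))" for n x
    unfolding g_def happ_def by simp
  have gmeas: "(\<lambda>\<omega>. ennreal (g n (Z \<omega>))) \<in> borel_measurable M" if "Z \<in> borel_measurable M" for Z n
    unfolding gform pos_part_def using that by measurable
  have step: "(\<integral>\<^sup>+\<omega>. ennreal (g n (X \<omega>)) \<partial>M) \<le> (\<integral>\<^sup>+\<omega>. ennreal (g n (Y \<omega>)) \<partial>M)" for n
    unfolding gform by (rule hinge_combo_le[OF X Y H c0 dl_nonneg[OF cvx mono hpos]])
  have "(\<integral>\<^sup>+\<omega>. ennreal (f (X \<omega>)) \<partial>M) = (\<integral>\<^sup>+\<omega>. liminf (\<lambda>n. ennreal (g n (X \<omega>))) \<partial>M)"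
  proof (rule nn_integral_cong)
    fix \<omega>
    have "(\<lambda>n. ennreal (g n (X \<omega>))) \<longlonglongrightarrow> ennreal (f (X \<omega>))"
      by (rule tendsto_ennrealI[OF g_lim])
    then show "ennreal (f (X \<omega>)) = liminf (\<lambda>n. ennreal (g n (X \<omega>)))"
      by (simp add: lim_imp_Liminf)
  qed
  also have "\<dots> \<le> liminf (\<lambda>n. \<integral>\<^sup>+\<omega>. ennreal (g n (X \<omega>)) \<partial>M)"
    by (rule nn_integral_liminf) (rule gmeas[OF X])
  also have "\<dots> \<le> limsup (\<lambda>n. \<integral>\<^sup>+\<omega>. ennreal (g n (X \<omega>)) \<partial>M)"
    by (rule Liminf_le_Limsup) simp
  also have "\<dots> \<le> (\<integral>\<^sup>+\<omega>. ennreal (f (Y \<omega>)) \<partial>M)"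
  proof (rule Limsup_bounded, rule always_eventually, rule allI)
    fix n
    have "(\<integral>\<^sup>+\<omega>. ennreal (g n (Y \<omega>)) \<partial>M) \<le> (\<integral>\<^sup>+\<omega>. ennreal (f (Y \<omega>)) \<partial>M)"
      by (intro nn_integral_mono ennreal_leI g_le)
    then show "(\<integral>\<^sup>+\<omega>. ennreal (g n (X \<omega>)) \<partial>M) \<le> (\<integral>\<^sup>+\<omega>. ennreal (f (Y \<omega>)) \<partial>M)"
      using step[of n] by simp
  qed
  finally show ?thesis .
qed

lemma convex_on_max_fun:
  fixes f g :: "real \<Rightarrow> real"
  assumes "convex_on UNIV f" "convex_on UNIV g"
  shows "convex_on UNIV (\<lambda>x. max (f x) (g x))"
proof (rule convex_onI)
  fix t x y :: real assume t: "0 < t" "t < 1"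
  have "f ((1 - t) *\<^sub>R x + t *\<^sub>R y) \<le> (1 - t) * f x + t * f y"
    using convex_onD[OF assms(1)] t by simp
  moreover have "g ((1 - t) *\<^sub>R x + t *\<^sub>R y) \<le> (1 - t) * g x + t * g y"
    using convex_onD[OF assms(2)] t by simp
  moreover have "(1 - t) * f x + t * f y \<le> (1 - t) * max (f x) (g x) + t * max (f y) (g y)"
    using t by (intro add_mono mult_left_mono) auto
  moreover have "(1 - t) * g x + t * g y \<le> (1 - t) * max (f x) (g x) + t * max (f y) (g y)"
    using t by (intro add_mono mult_left_mono) auto
  ultimately show "max (f ((1 - t) *\<^sub>R x + t *\<^sub>R y)) (g ((1 - t) *\<^sub>R x + t *\<^sub>R y))
      \<le> (1 - t) * max (f x) (g x) + t * max (f y) (g y)" by linarith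
qed simp

lemma convex_on_reflect:
  fixes g :: "real \<Rightarrow> real"
  assumes "convex_on UNIV g"
  shows "convex_on UNIV (\<lambda>x. g (- x))"
proof (rule convex_onI)
  fix t x y :: real assume t: "0 < t" "t < 1"
  have H0: "g ((1 - t) *\<^sub>R (-x) + t *\<^sub>R (-y)) \<le> (1 - t) * g (-x) + t * g (-y)"
    using convex_onD[OF assms, of t "-x" "-y"] t by simp
  have E: "(1 - t) *\<^sub>R (-x) + t *\<^sub>R (-y) = - ((1 - t) *\<^sub>R x + t *\<^sub>R y)"
    by (simp add: algebra_simps)
  show "g (- ((1 - t) *\<^sub>R x + t *\<^sub>R y)) \<le> (1 - t) * g (- x) + t * g (- y)"
    using H0 by (simp only: E)
qed simp

lemma convex_on_pos_part_shift:
  fixes u :: "real \<Rightarrow> real"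
  assumes "convex_on UNIV u"
  shows "convex_on UNIV (\<lambda>x. pos_part (u x + c))"
proof -
  have "convex_on UNIV (\<lambda>x. u x + c)"
    using convex_on_add[OF assms, of "\<lambda>x. c"] convex_on_const[of UNIV c] by simp
  then have "convex_on UNIV (\<lambda>x. max (u x + c) ((\<lambda>x. 0) x))"
    by (rule convex_on_max_fun) (simp add: convex_on_const)
  then show ?thesis by (simp add: pos_part_def)
qed

lemma convex_mono_from_min:
  fixes v :: "real \<Rightarrow> real"
  assumes cvx: "convex_on UNIV v" and mn: "\<And>x. v m \<le> v x" and ab: "m \<le> a" "a \<le> b"
  shows "v a \<le> v b"
proof -
  have "v a * (b - m) \<le> (b - a) * v m + (a - m) * v b" by (rule cvx3[OF cvx ab])
  also have "\<dots> \<le> (b - a) * v b + (a - m) * v b" using ab mn[of b] by (intro add_mono mult_left_mono) auto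
  finally have "v a * (b - m) \<le> v b * (b - m)" by (simp add: algebra_simps)
  then show ?thesis using ab
    by (cases "b = m") (auto simp: mult_le_cancel_right)
qed

lemma clamp_convex:
  fixes v :: "real \<Rightarrow> real"
  assumes cvx: "convex_on UNIV v" and mn: "\<And>x. v m \<le> v x"
  shows "convex_on UNIV (\<lambda>x. v (max x m))" and "mono (\<lambda>x. v (max x m))"
proof -
  show "mono (\<lambda>x. v (max x m))"
    by (rule monoI) (rule convex_mono_from_min[OF cvx mn], auto)
  show "convex_on UNIV (\<lambda>x. v (max x m))"
  proof (rule convex_onI)
    fix t x y :: real assume t: "0 < t" "t < 1"
    have m1: "(1 - t) * x + t * y \<le> (1 - t) * max x m + t * max y m"
      using t by (intro add_mono mult_left_mono) auto
    have m2: "(1 - t) * m + t * m \<le> (1 - t) * max x m + t * max y m"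
      using t by (intro add_mono mult_left_mono) auto
    have m2': "m \<le> (1 - t) * max x m + t * max y m" using m2 by (simp add: algebra_simps)
    have "max ((1 - t) * x + t * y) m \<le> (1 - t) * max x m + t * max y m"
      by (rule max.boundedI[OF m1 m2'])
    then have "max ((1 - t) *\<^sub>R x + t *\<^sub>R y) m \<le> (1 - t) * max x m + t * max y m"
      by simp
    then have "v (max ((1 - t) *\<^sub>R x + t *\<^sub>R y) m) \<le> v ((1 - t) * max x m + t * max y m)"
      by (intro convex_mono_from_min[OF cvx mn]) auto
    also have "\<dots> \<le> (1 - t) * v (max x m) + t * v (max y m)"
      using convex_onD[OF cvx, of t "max x m" "max y m"] t by simp
    finally show "v (max ((1 - t) *\<^sub>R x + t *\<^sub>R y) m) \<le> (1 - t) * v (max x m) + t * v (max y m)" .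
  qed simp
qed

lemma convex_trichotomy:
  fixes u :: "real \<Rightarrow> real"
  assumes cvx: "convex_on UNIV u"
  shows "mono u \<or> antimono u \<or> (\<exists>m. \<forall>x. u m \<le> u x)"
proof (rule ccontr)
  assume H: "\<not> ?thesis"
  then obtain a b where ab: "a \<le> b" "u a > u b" unfolding mono_def by auto
  from H obtain c d where cd: "c \<le> d" "u c < u d" unfolding antimono_def by auto
  have ab': "a < b" using ab by (cases "a = b") auto
  have cd': "c < d" using cd by (cases "c = d") auto
  have cont: "continuous_on UNIV u"
    using convex_on_continuous[OF open_UNIV cvx] .
  define I where "I = {min a c .. max b d}"
  have "compact I" "I \<noteq> {}" unfolding I_def using ab' by (auto simp: min_def max_def)
  then obtain m where m: "m \<in> I" "\<And>y. y \<in> I \<Longrightarrow> u m \<le> u y"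
    using continuous_attains_inf[of I u] continuous_on_subset[OF cont] by blast
  have "u m \<le> u x" for x
  proof (cases "x \<in> I")
    case True then show ?thesis using m by auto
  next
    case False
    then consider "x > max b d" | "x < min a c" unfolding I_def by force
    then show ?thesis
    proof cases
      case 1
      have "u d * (x - c) \<le> (x - d) * u c + (d - c) * u x"
        by (rule cvx3[OF cvx]) (use 1 cd' in auto)
      moreover have "(x - d) * u c \<le> (x - d) * u d" using 1 cd by (intro mult_left_mono) auto
      ultimately have "u d * (d - c) \<le> u x * (d - c)" by (simp add: algebra_simps)
      then have "u d \<le> u x" using cd' by (simp add: mult_le_cancel_right)
      moreover have "u m \<le> u d" using m(2)[of d] cd' unfolding I_def by (simp add: min_le_iff_disj le_max_iff_disj)
      ultimately show ?thesis by simp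
    next
      case 2
      have "u a * (b - x) \<le> (b - a) * u x + (a - x) * u b"
        by (rule cvx3[OF cvx]) (use 2 ab' in auto)
      moreover have "(a - x) * u b \<le> (a - x) * u a" using 2 ab by (intro mult_left_mono) auto
      ultimately have "u a * (b - a) \<le> u x * (b - a)" by (simp add: algebra_simps)
      then have "u a \<le> u x" using ab' by (simp add: mult_le_cancel_right)
      moreover have "u m \<le> u a" using m(2)[of a] ab' unfolding I_def by (simp add: min_le_iff_disj le_max_iff_disj)
      ultimately show ?thesis by simp
    qed
  qed
  then show False using H by blast
qed

lemma star_to_ext:
  fixes a b c d :: ennreal
  assumes le: "a + d \<le> c + b" and wx: "a < \<infinity> \<or> b < \<infinity>" and wy: "c < \<infinity> \<or> d < \<infinity>"
  shows "enn2ereal a - enn2ereal b \<le> enn2ereal c - enn2ereal d"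
proof (cases "c = \<infinity>")
  case True
  then have "d \<noteq> \<infinity>" using wy by auto
  then obtain rd where "d = ennreal rd" by (cases d) auto
  then show ?thesis using True by simp
next
  case cfin: False
  show ?thesis
  proof (cases "b = \<infinity>")
    case True
    then have "a \<noteq> \<infinity>" using wx by auto
    then obtain ra where "a = ennreal ra" "ra \<ge> 0" by (cases a) auto
    then show ?thesis using True by (simp add: enn2ereal_ennreal)
  next
    case bfin: False
    have "c + b < \<infinity>" using cfin bfin by (simp add: less_top[symmetric])
    then have "a + d < \<infinity>" by (rule le_less_trans[OF le])
    then have afin: "a \<noteq> \<infinity>" and dfin: "d \<noteq> \<infinity>" by auto
    obtain ra where ra: "a = ennreal ra" "ra \<ge> 0" using afin by (cases a) auto
    obtain rb where rb: "b = ennreal rb" "rb \<ge> 0" using bfin by (cases b) auto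
    obtain rc where rc: "c = ennreal rc" "rc \<ge> 0" using cfin by (cases c) auto
    obtain rd where rd: "d = ennreal rd" "rd \<ge> 0" using dfin by (cases d) auto
    have "ennreal (ra + rd) \<le> ennreal (rc + rb)"
      using le ra rb rc rd by (simp add: ennreal_plus)
    then have "ra + rd \<le> rc + rb" using rc rb by (subst (asm) ennreal_le_iff) auto
    then show ?thesis using ra rb rc rd by simp
  qed
qed

lemma cont_meas:
  fixes u :: "real \<Rightarrow> real"
  assumes "convex_on UNIV u" "Z \<in> borel_measurable M"
  shows "(\<lambda>\<omega>. u (Z \<omega>)) \<in> borel_measurable M"
  using borel_measurable_continuous_on[OF convex_on_continuous[OF open_UNIV assms(1)] assms(2)] .

lemma K_minus:
  fixes M :: "'a measure" and X Y :: "'a \<Rightarrow> real" and f :: "real \<Rightarrow> real"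
  assumes X: "X \<in> borel_measurable M" and Y: "Y \<in> borel_measurable M"
    and H: "\<And>w. (\<integral>\<^sup>+\<omega>. ennreal (neg_part (X \<omega> - w)) \<partial>M) \<le> (\<integral>\<^sup>+\<omega>. ennreal (neg_part (Y \<omega> - w)) \<partial>M)"
    and cvx: "convex_on UNIV f" and anti: "antimono f" and nn: "\<And>x. f x \<ge> 0"
  shows "(\<integral>\<^sup>+\<omega>. ennreal (f (X \<omega>)) \<partial>M) \<le> (\<integral>\<^sup>+\<omega>. ennreal (f (Y \<omega>)) \<partial>M)"
proof -
  have pn: "pos_part (- Z - w) = neg_part (Z - (- w))" for Z w :: real
    by (simp add: pos_part_def neg_part_def)
  have "(\<integral>\<^sup>+\<omega>. ennreal (f (- (- X \<omega>))) \<partial>M) \<le> (\<integral>\<^sup>+\<omega>. ennreal (f (- (- Y \<omega>))) \<partial>M)"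
  proof (rule K_plus[where f="\<lambda>x. f (- x)"])
    show "(\<lambda>\<omega>. - X \<omega>) \<in> borel_measurable M" "(\<lambda>\<omega>. - Y \<omega>) \<in> borel_measurable M"
      using X Y by measurable
    show "(\<integral>\<^sup>+\<omega>. ennreal (pos_part (- X \<omega> - w)) \<partial>M) \<le> (\<integral>\<^sup>+\<omega>. ennreal (pos_part (- Y \<omega> - w)) \<partial>M)" for w
      unfolding pn using H .
    show "convex_on UNIV (\<lambda>x. f (- x))" by (rule convex_on_reflect[OF cvx])
    show "mono (\<lambda>x. f (- x))" using anti by (auto simp: mono_def antimono_def)
  qed (use nn in auto)
  then show ?thesis by simp
qed

lemma star_mono:
  fixes M :: "'a measure" and X Y :: "'a \<Rightarrow> real" and u :: "real \<Rightarrow> real"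
  assumes P: "prob_space M" and X: "X \<in> borel_measurable M" and Y: "Y \<in> borel_measurable M"
    and H: "\<And>w. (\<integral>\<^sup>+\<omega>. ennreal (pos_part (X \<omega> - w)) \<partial>M) \<le> (\<integral>\<^sup>+\<omega>. ennreal (pos_part (Y \<omega> - w)) \<partial>M)"
    and cvx: "convex_on UNIV u" and mono: "mono u"
  shows "(\<integral>\<^sup>+\<omega>. ennreal (pos_part (u (X \<omega>))) \<partial>M) + (\<integral>\<^sup>+\<omega>. ennreal (neg_part (u (Y \<omega>))) \<partial>M)
       \<le> (\<integral>\<^sup>+\<omega>. ennreal (pos_part (u (Y \<omega>))) \<partial>M) + (\<integral>\<^sup>+\<omega>. ennreal (neg_part (u (X \<omega>))) \<partial>M)"
    (is "?PX + ?NY \<le> ?PY + ?NX")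
proof -
  interpret prob_space M by (rule P)
  define cn where "cn n = neg_part (u (- real n))" for n :: nat
  define B where "B Z n = (\<integral>\<^sup>+\<omega>. ennreal (min (neg_part (u (Z \<omega>))) (cn n)) \<partial>M)" for Z and n :: nat
  define F where "F Z n = (\<integral>\<^sup>+\<omega>. ennreal (pos_part (u (Z \<omega>) + cn n)) \<partial>M)" for Z and n :: nat
  have cn0: "cn n \<ge> 0" for n unfolding cn_def by simp
  have um: "(\<lambda>\<omega>. u (Z \<omega>)) \<in> borel_measurable M" if "Z \<in> borel_measurable M" for Z
    by (rule cont_meas[OF cvx that])
  have ident: "ennreal (pos_part (z + c)) + ennreal (min (neg_part z) c) = ennreal (pos_part z) + ennreal c"
    if "c \<ge> 0" for z c :: real
  proof -
    have "pos_part (z + c) + min (neg_part z) c = pos_part z + c"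
      using that by (auto simp: pos_part_def neg_part_def max_def min_def)
    then show ?thesis using that by (simp add: ennreal_plus[symmetric] del: ennreal_plus)
  qed
  have FB: "F Z n + B Z n = (\<integral>\<^sup>+\<omega>. ennreal (pos_part (u (Z \<omega>))) \<partial>M) + ennreal (cn n)"
    if Z: "Z \<in> borel_measurable M" for Z n
  proof -
    have "F Z n + B Z n = (\<integral>\<^sup>+\<omega>. ennreal (pos_part (u (Z \<omega>) + cn n)) + ennreal (min (neg_part (u (Z \<omega>))) (cn n)) \<partial>M)"
      unfolding F_def B_def using um[OF Z]
      by (subst nn_integral_add) (auto simp: pos_part_def neg_part_def)
    also have "\<dots> = (\<integral>\<^sup>+\<omega>. ennreal (pos_part (u (Z \<omega>))) + ennreal (cn n) \<partial>M)"
      using ident[OF cn0] by simp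
    also have "\<dots> = (\<integral>\<^sup>+\<omega>. ennreal (pos_part (u (Z \<omega>))) \<partial>M) + ennreal (cn n)"
      using um[OF Z] by (subst nn_integral_add) (auto simp: pos_part_def emeasure_space_1)
    finally show ?thesis .
  qed
  have Fle: "F X n \<le> F Y n" for n
    unfolding F_def
  proof (rule K_plus[OF X Y H])
    show "convex_on UNIV (\<lambda>x. pos_part (u x + cn n))" by (rule convex_on_pos_part_shift[OF cvx])
    show "mono (\<lambda>x. pos_part (u x + cn n))"
    proof (rule monoI)
      fix x y :: real assume "x \<le> y"
      then have "u x \<le> u y" by (rule monoD[OF mono])
      then show "pos_part (u x + cn n) \<le> pos_part (u y + cn n)" by (simp add: pos_part_def)
    qed
  qed simp
  have BleN: "B X n \<le> ?NX" for n
    unfolding B_def by (intro nn_integral_mono ennreal_leI) simp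
  have step: "?PX + B Y n \<le> ?PY + ?NX" for n
  proof -
    have "(?PX + B Y n) + ennreal (cn n) = (F X n + B X n) + B Y n"
      using FB[OF X] by (simp add: ac_simps)
    also have "\<dots> \<le> (F Y n + B Y n) + B X n"
      using Fle[of n] by (simp add: ac_simps add_right_mono)
    also have "\<dots> = ?PY + ennreal (cn n) + B X n"
      using FB[OF Y] by simp
    also have "\<dots> \<le> (?PY + ?NX) + ennreal (cn n)"
      using BleN[of n] by (simp add: ac_simps add_left_mono)
    finally show ?thesis by (simp add: ennreal_add_left_cancel_le add.commute[of _ "ennreal (cn n)"])
  qed
  have inc: "incseq (\<lambda>n \<omega>. ennreal (min (neg_part (u (Y \<omega>))) (cn n)))"
  proof (rule incseq_SucI, rule le_funI)
    fix n \<omega>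
    have "u (- real (Suc n)) \<le> u (- real n)" by (rule monoD[OF mono]) simp
    then have "cn n \<le> cn (Suc n)" unfolding cn_def by (simp add: neg_part_def)
    then show "ennreal (min (neg_part (u (Y \<omega>))) (cn n)) \<le> ennreal (min (neg_part (u (Y \<omega>))) (cn (Suc n)))"
      by (intro ennreal_leI) simp
  qed
  have sup: "(SUP n. ennreal (min (neg_part (u y)) (cn n))) = ennreal (neg_part (u y))" for y
  proof (rule antisym)
    show "(SUP n. ennreal (min (neg_part (u y)) (cn n))) \<le> ennreal (neg_part (u y))"
      by (intro SUP_least ennreal_leI) simp
    obtain n :: nat where n: "real n \<ge> - y" using real_arch_simple by blast
    have "u (- real n) \<le> u y" by (rule monoD[OF mono]) (use n in simp)
    then have "neg_part (u y) \<le> cn n" unfolding cn_def by (simp add: neg_part_def)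
    then have "ennreal (neg_part (u y)) = ennreal (min (neg_part (u y)) (cn n))" by simp
    also have "\<dots> \<le> (SUP n. ennreal (min (neg_part (u y)) (cn n)))" by (rule SUP_upper) simp
    finally show "ennreal (neg_part (u y)) \<le> (SUP n. ennreal (min (neg_part (u y)) (cn n)))" .
  qed
  have "?NY = (SUP n. B Y n)"
  proof -
    have "?NY = (\<integral>\<^sup>+\<omega>. (SUP n. ennreal (min (neg_part (u (Y \<omega>))) (cn n))) \<partial>M)"
      by (simp add: sup)
    also have "\<dots> = (SUP n. B Y n)"
      unfolding B_def using um[OF Y]
      by (subst nn_integral_monotone_convergence_SUP[OF inc]) (auto simp: neg_part_def)
    finally show ?thesis .
  qed
  then have "?PX + ?NY = (SUP n. ?PX + B Y n)"
    by (simp add: ennreal_SUP_add_right)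
  also have "\<dots> \<le> ?PY + ?NX" by (rule SUP_least) (rule step)
  finally show ?thesis .
qed

lemma star_anti:
  fixes M :: "'a measure" and X Y :: "'a \<Rightarrow> real" and u :: "real \<Rightarrow> real"
  assumes P: "prob_space M" and X: "X \<in> borel_measurable M" and Y: "Y \<in> borel_measurable M"
    and H: "\<And>w. (\<integral>\<^sup>+\<omega>. ennreal (neg_part (X \<omega> - w)) \<partial>M) \<le> (\<integral>\<^sup>+\<omega>. ennreal (neg_part (Y \<omega> - w)) \<partial>M)"
    and cvx: "convex_on UNIV u" and anti: "antimono u"
  shows "(\<integral>\<^sup>+\<omega>. ennreal (pos_part (u (X \<omega>))) \<partial>M) + (\<integral>\<^sup>+\<omega>. ennreal (neg_part (u (Y \<omega>))) \<partial>M)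
       \<le> (\<integral>\<^sup>+\<omega>. ennreal (pos_part (u (Y \<omega>))) \<partial>M) + (\<integral>\<^sup>+\<omega>. ennreal (neg_part (u (X \<omega>))) \<partial>M)"
proof -
  have pn: "pos_part (- Z - w) = neg_part (Z - (- w))" for Z w :: real
    by (simp add: pos_part_def neg_part_def)
  have "(\<integral>\<^sup>+\<omega>. ennreal (pos_part (u (- (- X \<omega>)))) \<partial>M) + (\<integral>\<^sup>+\<omega>. ennreal (neg_part (u (- (- Y \<omega>)))) \<partial>M)
       \<le> (\<integral>\<^sup>+\<omega>. ennreal (pos_part (u (- (- Y \<omega>)))) \<partial>M) + (\<integral>\<^sup>+\<omega>. ennreal (neg_part (u (- (- X \<omega>)))) \<partial>M)"
  proof (rule star_mono[OF P, where u="\<lambda>x. u (- x)"])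
    show "(\<lambda>\<omega>. - X \<omega>) \<in> borel_measurable M" "(\<lambda>\<omega>. - Y \<omega>) \<in> borel_measurable M"
      using X Y by measurable
    show "(\<integral>\<^sup>+\<omega>. ennreal (pos_part (- X \<omega> - w)) \<partial>M) \<le> (\<integral>\<^sup>+\<omega>. ennreal (pos_part (- Y \<omega> - w)) \<partial>M)" for w
      unfolding pn using H .
    show "convex_on UNIV (\<lambda>x. u (- x))" by (rule convex_on_reflect[OF cvx])
    show "mono (\<lambda>x. u (- x))" using anti by (auto simp: mono_def antimono_def)
  qed
  then show ?thesis by simp
qed

lemma star_min:
  fixes M :: "'a measure" and X Y :: "'a \<Rightarrow> real" and u :: "real \<Rightarrow> real"
  assumes P: "prob_space M" and X: "X \<in> borel_measurable M" and Y: "Y \<in> borel_measurable M"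
    and Hp: "\<And>w. (\<integral>\<^sup>+\<omega>. ennreal (pos_part (X \<omega> - w)) \<partial>M) \<le> (\<integral>\<^sup>+\<omega>. ennreal (pos_part (Y \<omega> - w)) \<partial>M)"
    and Hn: "\<And>w. (\<integral>\<^sup>+\<omega>. ennreal (neg_part (X \<omega> - w)) \<partial>M) \<le> (\<integral>\<^sup>+\<omega>. ennreal (neg_part (Y \<omega> - w)) \<partial>M)"
    and cvx: "convex_on UNIV u" and mn: "\<And>x. u m \<le> u x"
  shows "(\<integral>\<^sup>+\<omega>. ennreal (pos_part (u (X \<omega>))) \<partial>M) + (\<integral>\<^sup>+\<omega>. ennreal (neg_part (u (Y \<omega>))) \<partial>M)
       \<le> (\<integral>\<^sup>+\<omega>. ennreal (pos_part (u (Y \<omega>))) \<partial>M) + (\<integral>\<^sup>+\<omega>. ennreal (neg_part (u (X \<omega>))) \<partial>M)"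
    (is "?PX + ?NY \<le> ?PY + ?NX")
proof -
  interpret prob_space M by (rule P)
  define v where "v x = u x - u m" for x
  have vcvx: "convex_on UNIV v" unfolding v_def
    using convex_on_diff[OF cvx, of "\<lambda>x. u m"] by (simp add: convex_on_const concave_on_const)
  have vmn: "v m \<le> v x" for x unfolding v_def using mn[of x] by simp
  have v0: "v x \<ge> 0" for x unfolding v_def using mn[of x] by simp
  define v2 where "v2 x = v (max x m)" for x
  define w where "w y = v (- y)" for y
  have wcvx: "convex_on UNIV w" unfolding w_def by (rule convex_on_reflect[OF vcvx])
  have wmn: "w (- m) \<le> w y" for y unfolding w_def using vmn[of "- y"] by simp
  define w2 where "w2 y = w (max y (- m))" for y
  define v1 where "v1 x = v (min x m)" for x
  have v1w2: "v1 x = w2 (- x)" for x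
    unfolding v1_def w2_def w_def by (simp add: max_def min_def)
  have v2cvx: "convex_on UNIV v2" and v2mono: "mono v2"
    unfolding v2_def using clamp_convex[OF vcvx vmn] by auto
  have w2cvx: "convex_on UNIV w2" and w2mono: "mono w2"
    unfolding w2_def using clamp_convex[OF wcvx wmn] by auto
  have v1cvx: "convex_on UNIV v1"
    unfolding v1w2 by (rule convex_on_reflect[OF w2cvx])
  have v1anti: "antimono v1"
    unfolding v1w2 antimono_def using w2mono by (auto simp: mono_def)
  have split: "ennreal (v x) = ennreal (v1 x) + ennreal (v2 x)" for x
  proof -
    have "v m = 0" unfolding v_def by simp
    then have "v x = v1 x + v2 x" unfolding v1_def v2_def by (cases "x \<le> m") (auto simp: min_def max_def)
    then show ?thesis using v0 unfolding v1_def v2_def by (simp add: ennreal_plus[symmetric] del: ennreal_plus)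
  qed
  have vm: "(\<lambda>\<omega>. f (Z \<omega>)) \<in> borel_measurable M" if "Z \<in> borel_measurable M" "convex_on UNIV f" for Z :: "'a \<Rightarrow> real" and f :: "real \<Rightarrow> real"
    by (rule cont_meas[OF that(2,1)])
  have VI: "(\<integral>\<^sup>+\<omega>. ennreal (v (Z \<omega>)) \<partial>M) = (\<integral>\<^sup>+\<omega>. ennreal (v1 (Z \<omega>)) \<partial>M) + (\<integral>\<^sup>+\<omega>. ennreal (v2 (Z \<omega>)) \<partial>M)"
    if Z: "Z \<in> borel_measurable M" for Z
    unfolding split using vm[OF Z v1cvx] vm[OF Z v2cvx] by (subst nn_integral_add) auto
  have V: "(\<integral>\<^sup>+\<omega>. ennreal (v (X \<omega>)) \<partial>M) \<le> (\<integral>\<^sup>+\<omega>. ennreal (v (Y \<omega>)) \<partial>M)"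
    unfolding VI[OF X] VI[OF Y]
  proof (rule add_mono)
    show "(\<integral>\<^sup>+\<omega>. ennreal (v1 (X \<omega>)) \<partial>M) \<le> (\<integral>\<^sup>+\<omega>. ennreal (v1 (Y \<omega>)) \<partial>M)"
      by (rule K_minus[OF X Y Hn v1cvx v1anti]) (simp add: v1_def v0)
    show "(\<integral>\<^sup>+\<omega>. ennreal (v2 (X \<omega>)) \<partial>M) \<le> (\<integral>\<^sup>+\<omega>. ennreal (v2 (Y \<omega>)) \<partial>M)"
      by (rule K_plus[OF X Y Hp v2cvx v2mono]) (simp add: v2_def v0)
  qed
  define c where "c = u m"
  have ident: "ennreal (pos_part (u z)) + ennreal (neg_part c) = ennreal (v z) + ennreal (pos_part c) + ennreal (neg_part (u z))" for z
  proof -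
    have "pos_part (u z) + neg_part c = v z + pos_part c + neg_part (u z)"
      unfolding v_def c_def by (auto simp: pos_part_def neg_part_def max_def)
    then show ?thesis using v0[of z] by (simp add: ennreal_plus[symmetric] del: ennreal_plus)
  qed
  have E: "(\<integral>\<^sup>+\<omega>. ennreal (pos_part (u (Z \<omega>))) \<partial>M) + ennreal (neg_part c) =
     (\<integral>\<^sup>+\<omega>. ennreal (v (Z \<omega>)) \<partial>M) + ennreal (pos_part c) + (\<integral>\<^sup>+\<omega>. ennreal (neg_part (u (Z \<omega>))) \<partial>M)"
    if Z: "Z \<in> borel_measurable M" for Z
  proof -
    have um: "(\<lambda>\<omega>. u (Z \<omega>)) \<in> borel_measurable M" by (rule vm[OF Z cvx])
    have vz: "(\<lambda>\<omega>. v (Z \<omega>)) \<in> borel_measurable M" by (rule vm[OF Z vcvx])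
    have "(\<integral>\<^sup>+\<omega>. ennreal (pos_part (u (Z \<omega>))) \<partial>M) + ennreal (neg_part c) =
        (\<integral>\<^sup>+\<omega>. ennreal (pos_part (u (Z \<omega>))) + ennreal (neg_part c) \<partial>M)"
      using um by (subst nn_integral_add) (auto simp: pos_part_def emeasure_space_1)
    also have "\<dots> = (\<integral>\<^sup>+\<omega>. (ennreal (v (Z \<omega>)) + ennreal (pos_part c)) + ennreal (neg_part (u (Z \<omega>))) \<partial>M)"
      by (simp add: ident)
    also have "\<dots> = (\<integral>\<^sup>+\<omega>. ennreal (v (Z \<omega>)) + ennreal (pos_part c) \<partial>M) + (\<integral>\<^sup>+\<omega>. ennreal (neg_part (u (Z \<omega>))) \<partial>M)"
      using um vz by (subst nn_integral_add) (auto simp: neg_part_def)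
    also have "\<dots> = (\<integral>\<^sup>+\<omega>. ennreal (v (Z \<omega>)) \<partial>M) + ennreal (pos_part c) + (\<integral>\<^sup>+\<omega>. ennreal (neg_part (u (Z \<omega>))) \<partial>M)"
      using vz by (subst nn_integral_add) (auto simp: emeasure_space_1)
    finally show ?thesis .
  qed
  have "(?PX + ?NY) + ennreal (neg_part c) = (\<integral>\<^sup>+\<omega>. ennreal (v (X \<omega>)) \<partial>M) + ennreal (pos_part c) + ?NX + ?NY"
    using E[OF X] by (simp add: ac_simps)
  also have "\<dots> \<le> (\<integral>\<^sup>+\<omega>. ennreal (v (Y \<omega>)) \<partial>M) + ennreal (pos_part c) + ?NY + ?NX"
    using V by (simp add: ac_simps add_right_mono)
  also have "\<dots> = (?PY + ?NX) + ennreal (neg_part c)"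
    using E[OF Y] by (simp add: ac_simps)
  finally show ?thesis by (simp add: ennreal_add_left_cancel_le add.commute[of _ "ennreal (neg_part c)"])
qed

lemma ext_nonneg:
  assumes "\<And>\<omega>. g \<omega> \<ge> 0"
  shows "ext_expectation M g = enn2ereal (\<integral>\<^sup>+\<omega>. ennreal (g \<omega>) \<partial>M)"
proof -
  have "pos_part (g \<omega>) = g \<omega>" "neg_part (g \<omega>) = 0" for \<omega>
    using assms[of \<omega>] by (auto simp: pos_part_def neg_part_def)
  then show ?thesis unfolding ext_expectation_def by (simp add: zero_ennreal.rep_eq)
qed

lemma wd_nonneg:
  assumes "\<And>\<omega>. g \<omega> \<ge> 0"
  shows "expectation_well_defined M g"
proof -
  have "neg_part (g \<omega>) = 0" for \<omega>
    using assms[of \<omega>] by (auto simp: pos_part_def neg_part_def)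
  then show ?thesis unfolding expectation_well_defined_def by simp
qed

lemma convex_pos_part_lin: "convex_on UNIV (\<lambda>x::real. pos_part (x - w))"
  using convex_on_pos_part_shift[of "\<lambda>x. x" "- w"] convex_on_ident[of UNIV] by simp

lemma convex_neg_part_lin: "convex_on UNIV (\<lambda>x::real. neg_part (x - w))"
proof -
  have "convex_on UNIV (\<lambda>x::real. - x)"
    using convex_on_reflect[of "\<lambda>x. x"] convex_on_ident[of UNIV] by simp
  then have "convex_on UNIV (\<lambda>x::real. pos_part (- x + w))"
    by (rule convex_on_pos_part_shift)
  moreover have "pos_part (- x + w) = neg_part (x - w)" for x
    by (simp add: pos_part_def neg_part_def)
  ultimately show ?thesis by simp
qed

lemma i_iff_iii:
  fixes M :: "'a measure" and X Y :: "'a \<Rightarrow> real"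
  assumes P: "prob_space M" and X: "X \<in> borel_measurable M" and Y: "Y \<in> borel_measurable M"
  shows "cx_le M X Y \<longleftrightarrow>
           (\<forall>w::real.
              ext_expectation M (\<lambda>\<omega>. neg_part (X \<omega> - w)) \<le> ext_expectation M (\<lambda>\<omega>. neg_part (Y \<omega> - w)) \<and>
              ext_expectation M (\<lambda>\<omega>. pos_part (X \<omega> - w)) \<le> ext_expectation M (\<lambda>\<omega>. pos_part (Y \<omega> - w)))"
proof
  assume C: "cx_le M X Y"
  show "\<forall>w. ext_expectation M (\<lambda>\<omega>. neg_part (X \<omega> - w)) \<le> ext_expectation M (\<lambda>\<omega>. neg_part (Y \<omega> - w)) \<and>
              ext_expectation M (\<lambda>\<omega>. pos_part (X \<omega> - w)) \<le> ext_expectation M (\<lambda>\<omega>. pos_part (Y \<omega> - w))"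
  proof
    fix w
    have "ext_expectation M (\<lambda>\<omega>. (\<lambda>x. neg_part (x - w)) (X \<omega>)) \<le> ext_expectation M (\<lambda>\<omega>. (\<lambda>x. neg_part (x - w)) (Y \<omega>))"
      by (rule C[unfolded cx_le_def, rule_format, OF convex_neg_part_lin[of w]]) (auto intro!: wd_nonneg)
    moreover have "ext_expectation M (\<lambda>\<omega>. (\<lambda>x. pos_part (x - w)) (X \<omega>)) \<le> ext_expectation M (\<lambda>\<omega>. (\<lambda>x. pos_part (x - w)) (Y \<omega>))"
      by (rule C[unfolded cx_le_def, rule_format, OF convex_pos_part_lin[of w]]) (auto intro!: wd_nonneg)
    ultimately show "ext_expectation M (\<lambda>\<omega>. neg_part (X \<omega> - w)) \<le> ext_expectation M (\<lambda>\<omega>. neg_part (Y \<omega> - w)) \<and>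
              ext_expectation M (\<lambda>\<omega>. pos_part (X \<omega> - w)) \<le> ext_expectation M (\<lambda>\<omega>. pos_part (Y \<omega> - w))"
      by simp
  qed
next
  assume H: "\<forall>w. ext_expectation M (\<lambda>\<omega>. neg_part (X \<omega> - w)) \<le> ext_expectation M (\<lambda>\<omega>. neg_part (Y \<omega> - w)) \<and>
              ext_expectation M (\<lambda>\<omega>. pos_part (X \<omega> - w)) \<le> ext_expectation M (\<lambda>\<omega>. pos_part (Y \<omega> - w))"
  have Hp: "(\<integral>\<^sup>+\<omega>. ennreal (pos_part (X \<omega> - w)) \<partial>M) \<le> (\<integral>\<^sup>+\<omega>. ennreal (pos_part (Y \<omega> - w)) \<partial>M)" for w
    using H[rule_format, of w] by (simp add: ext_nonneg less_eq_ennreal.rep_eq)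
  have Hn: "(\<integral>\<^sup>+\<omega>. ennreal (neg_part (X \<omega> - w)) \<partial>M) \<le> (\<integral>\<^sup>+\<omega>. ennreal (neg_part (Y \<omega> - w)) \<partial>M)" for w
    using H[rule_format, of w] by (simp add: ext_nonneg less_eq_ennreal.rep_eq)
  show "cx_le M X Y"
    unfolding cx_le_def
  proof (intro allI impI)
    fix u :: "real \<Rightarrow> real"
    assume cvx: "convex_on UNIV u" and wx: "expectation_well_defined M (\<lambda>\<omega>. u (X \<omega>))"
      and wy: "expectation_well_defined M (\<lambda>\<omega>. u (Y \<omega>))"
    have star: "(\<integral>\<^sup>+\<omega>. ennreal (pos_part (u (X \<omega>))) \<partial>M) + (\<integral>\<^sup>+\<omega>. ennreal (neg_part (u (Y \<omega>))) \<partial>M)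
       \<le> (\<integral>\<^sup>+\<omega>. ennreal (pos_part (u (Y \<omega>))) \<partial>M) + (\<integral>\<^sup>+\<omega>. ennreal (neg_part (u (X \<omega>))) \<partial>M)"
      using convex_trichotomy[OF cvx]
    proof (elim disjE exE)
      assume "mono u" then show ?thesis by (rule star_mono[OF P X Y Hp cvx])
    next
      assume "antimono u" then show ?thesis by (rule star_anti[OF P X Y Hn cvx])
    next
      fix m assume "\<forall>x. u m \<le> u x" then show ?thesis by (intro star_min[OF P X Y Hp Hn cvx]) auto
    qed
    show "ext_expectation M (\<lambda>\<omega>. u (X \<omega>)) \<le> ext_expectation M (\<lambda>\<omega>. u (Y \<omega>))"
      unfolding ext_expectation_def
      by (rule star_to_ext[OF star]) (use wx wy in \<open>auto simp: expectation_well_defined_def\<close>)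
  qed
qed

lemma lq_cdf:
  fixes M :: "'a measure" and X :: "'a \<Rightarrow> real"
  assumes P: "prob_space M" and X: "X \<in> borel_measurable M"
  shows "left_quantile M X = (\<lambda>t. Inf {x. t \<le> cdf (distr M borel X) x})"
proof -
  have "cdf (distr M borel X) x = measure M {\<omega> \<in> space M. X \<omega> \<le> x}" for x
    unfolding cdf_def using X by (subst measure_distr) (auto intro!: arg_cong[where f="measure M"])
  then show ?thesis unfolding left_quantile_def by simp
qed

lemma lq_transfer:
  fixes M :: "'a measure" and X :: "'a \<Rightarrow> real" and g :: "real \<Rightarrow> ennreal"
  assumes P: "prob_space M" and X: "X \<in> borel_measurable M" and g: "g \<in> borel_measurable borel"
  shows "(\<integral>\<^sup>+\<omega>. g (X \<omega>) \<partial>M) = (\<integral>\<^sup>+t. g (left_quantile M X t) * indicator {0<..<1} t \<partial>lborel)"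
proof -
  define D where "D = distr M borel X"
  have rd: "real_distribution D" unfolding D_def using prob_space.real_distribution_distr[OF P] X by simp
  interpret Dd: cdf_distribution D by (rule cdf_distribution.intro[OF rd])
  have lq: "left_quantile M X = (\<lambda>\<omega>. Inf {x. \<omega> \<le> cdf D x})" unfolding lq_cdf[OF P X] D_def ..
  have "(\<integral>\<^sup>+\<omega>. g (X \<omega>) \<partial>M) = (\<integral>\<^sup>+x. g x \<partial>D)"
    unfolding D_def using X g by (subst nn_integral_distr) auto
  also have "\<dots> = (\<integral>\<^sup>+x. g x \<partial>(distr (restrict_space lborel {0<..<1::real}) borel (\<lambda>\<omega>. Inf {x. \<omega> \<le> cdf D x})))"
    by (simp add: Dd.distr_I_eq_M)
  also have "\<dots> = (\<integral>\<^sup>+t. g (Inf {x. t \<le> cdf D x}) \<partial>(restrict_space lborel {0<..<1::real}))"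
    using g by (subst nn_integral_distr) auto
  also have "\<dots> = (\<integral>\<^sup>+t. g (Inf {x. t \<le> cdf D x}) * indicator {0<..<1} t \<partial>lborel)"
    by (subst nn_integral_restrict_space) auto
  finally show ?thesis unfolding lq .
qed

lemma lq_mono:
  fixes M :: "'a measure" and X :: "'a \<Rightarrow> real"
  assumes P: "prob_space M" and X: "X \<in> borel_measurable M"
  shows "mono_on {0<..<1} (left_quantile M X)"
proof -
  define D where "D = distr M borel X"
  have rd: "real_distribution D" unfolding D_def using prob_space.real_distribution_distr[OF P] X by simp
  interpret Dd: cdf_distribution D by (rule cdf_distribution.intro[OF rd])
  have lq: "left_quantile M X = (\<lambda>\<omega>. Inf {x. \<omega> \<le> cdf D x})" unfolding lq_cdf[OF P X] D_def ..
  show ?thesis unfolding lq by (rule Dd.mono_I)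
qed

lemma lq_meas:
  fixes M :: "'a measure" and X :: "'a \<Rightarrow> real"
  assumes P: "prob_space M" and X: "X \<in> borel_measurable M"
  shows "left_quantile M X \<in> borel_measurable borel"
proof -
  define D where "D = distr M borel X"
  have rd: "real_distribution D" unfolding D_def using prob_space.real_distribution_distr[OF P] X by simp
  interpret Dd: cdf_distribution D by (rule cdf_distribution.intro[OF rd])
  have lq: "left_quantile M X = (\<lambda>\<omega>. Inf {x. \<omega> \<le> cdf D x})" unfolding lq_cdf[OF P X] D_def ..
  have c1: "mono_on {..0} (\<lambda>\<omega>. Inf {x. \<omega> \<le> cdf D x})"
  proof -
    have "{x. t \<le> cdf D x} = UNIV" if "t \<le> 0" for t using that Dd.cdf_nonneg by (auto intro: order_trans)
    then show ?thesis by (auto simp: mono_on_def)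
  qed
  have c2: "mono_on {1<..} (\<lambda>\<omega>. Inf {x. \<omega> \<le> cdf D x})"
  proof -
    have "{x. t \<le> cdf D x} = {}" if "t > 1" for t
    proof -
      have "\<not> t \<le> cdf D x" for x using Dd.cdf_bounded_prob[of x] that by linarith
      then show ?thesis by auto
    qed
    then show ?thesis by (auto simp: mono_on_def)
  qed
  have "(\<lambda>\<omega>. Inf {x. \<omega> \<le> cdf D x}) \<in> borel_measurable borel"
    by (rule borel_measurable_piecewise_mono[of "{{..0}, {0<..<1}, {1}, {1<..}}"])
       (auto simp: c1 c2 Dd.mono_I intro: mono_onI)
  then show ?thesis unfolding lq .
qed

lemma pos_part_measurable[measurable (raw)]:
  "f \<in> borel_measurable M \<Longrightarrow> (\<lambda>x. pos_part (f x)) \<in> borel_measurable M"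
  unfolding pos_part_def by measurable
lemma neg_part_measurable[measurable (raw)]:
  "f \<in> borel_measurable M \<Longrightarrow> (\<lambda>x. neg_part (f x)) \<in> borel_measurable M"
  unfolding neg_part_def by measurable

definition IP :: "real set \<Rightarrow> (real \<Rightarrow> real) \<Rightarrow> ennreal" where
  "IP S q = (\<integral>\<^sup>+t. ennreal (pos_part (q t)) * indicator S t \<partial>lborel)"
definition IN :: "real set \<Rightarrow> (real \<Rightarrow> real) \<Rightarrow> ennreal" where
  "IN S q = (\<integral>\<^sup>+t. ennreal (neg_part (q t)) * indicator S t \<partial>lborel)"
definition XP :: "real set \<Rightarrow> (real \<Rightarrow> real) \<Rightarrow> real \<Rightarrow> ennreal" where
  "XP S q w = (\<integral>\<^sup>+t. ennreal (pos_part (q t - w)) * indicator S t \<partial>lborel)"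
definition XN :: "real set \<Rightarrow> (real \<Rightarrow> real) \<Rightarrow> real \<Rightarrow> ennreal" where
  "XN S q w = (\<integral>\<^sup>+t. ennreal (neg_part (q t - w)) * indicator S t \<partial>lborel)"

lemma ext_set_integral_IP: "ext_set_integral S q = enn2ereal (IP S q) - enn2ereal (IN S q)"
  unfolding ext_set_integral_def IP_def IN_def ..

lemma nn_int_add3:
  fixes f1 f2 f3 :: "real \<Rightarrow> ennreal"
  assumes [measurable]: "f1 \<in> borel_measurable borel" "f2 \<in> borel_measurable borel" "f3 \<in> borel_measurable borel"
    and [measurable]: "S \<in> sets borel"
  shows "(\<integral>\<^sup>+t. (f1 t + f2 t + f3 t) * indicator S t \<partial>lborel) =
    (\<integral>\<^sup>+t. f1 t * indicator S t \<partial>lborel) + (\<integral>\<^sup>+t. f2 t * indicator S t \<partial>lborel) + (\<integral>\<^sup>+t. f3 t * indicator S t \<partial>lborel)"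
proof -
  have "(\<integral>\<^sup>+t. (f1 t + f2 t + f3 t) * indicator S t \<partial>lborel) =
     (\<integral>\<^sup>+t. (f1 t * indicator S t + f2 t * indicator S t) + f3 t * indicator S t \<partial>lborel)"
    by (simp add: distrib_right)
  also have "\<dots> = (\<integral>\<^sup>+t. f1 t * indicator S t + f2 t * indicator S t \<partial>lborel) + (\<integral>\<^sup>+t. f3 t * indicator S t \<partial>lborel)"
    by (rule nn_integral_add) measurable
  also have "(\<integral>\<^sup>+t. f1 t * indicator S t + f2 t * indicator S t \<partial>lborel) =
     (\<integral>\<^sup>+t. f1 t * indicator S t \<partial>lborel) + (\<integral>\<^sup>+t. f2 t * indicator S t \<partial>lborel)"
    by (rule nn_integral_add) measurable
  finally show ?thesis .
qed

lemma ID_gen: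
  fixes q :: "real \<Rightarrow> real"
  assumes [measurable]: "q \<in> borel_measurable borel" and [measurable]: "S \<in> sets borel"
  shows "IP S q + ennreal (neg_part w) * emeasure lborel S + XN S q w =
         IN S q + ennreal (pos_part w) * emeasure lborel S + XP S q w"
proof -
  have pt: "ennreal (pos_part (q t)) + ennreal (neg_part w) + ennreal (neg_part (q t - w)) =
            ennreal (neg_part (q t)) + ennreal (pos_part w) + ennreal (pos_part (q t - w))" for t
  proof -
    have "pos_part (q t) + neg_part w + neg_part (q t - w) = neg_part (q t) + pos_part w + pos_part (q t - w)"
      by (auto simp: pos_part_def neg_part_def max_def)
    then show ?thesis by (simp add: ennreal_plus[symmetric] del: ennreal_plus)
  qed
  have "(\<integral>\<^sup>+t. (ennreal (pos_part (q t)) + ennreal (neg_part w) + ennreal (neg_part (q t - w))) * indicator S t \<partial>lborel)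
      = (\<integral>\<^sup>+t. (ennreal (neg_part (q t)) + ennreal (pos_part w) + ennreal (pos_part (q t - w))) * indicator S t \<partial>lborel)"
    by (simp only: pt)
  moreover have "(\<integral>\<^sup>+t. (ennreal (pos_part (q t)) + ennreal (neg_part w) + ennreal (neg_part (q t - w))) * indicator S t \<partial>lborel)
      = IP S q + ennreal (neg_part w) * emeasure lborel S + XN S q w"
    unfolding IP_def XN_def
    by (subst nn_int_add3) (measurable, simp add: nn_integral_cmult_indicator)
  moreover have "(\<integral>\<^sup>+t. (ennreal (neg_part (q t)) + ennreal (pos_part w) + ennreal (pos_part (q t - w))) * indicator S t \<partial>lborel)
      = IN S q + ennreal (pos_part w) * emeasure lborel S + XP S q w"
    unfolding IN_def XP_def
    by (subst nn_int_add3) (measurable, simp add: nn_integral_cmult_indicator)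
  ultimately show ?thesis by simp
qed

lemma combine1:
  fixes a b c d A B P :: ennreal
  assumes le: "a + A \<le> b + B + P" and eq: "c + A = d + B + P"
    and fin: "b \<noteq> \<infinity>" "d \<noteq> \<infinity>" "A \<noteq> \<infinity>" "B \<noteq> \<infinity>"
  shows "enn2ereal a - enn2ereal b \<le> enn2ereal c - enn2ereal d"
proof (cases "P = \<infinity>")
  case True
  then have "c = \<infinity>" using eq fin by (auto simp: top_add ennreal_add_eq_top)
  then show ?thesis using fin by (cases d) auto
next
  case Pf: False
  have "b + B + P < \<infinity>" using fin Pf by (simp add: less_top[symmetric])
  then have "a + A < \<infinity>" by (rule le_less_trans[OF le])
  then have af: "a \<noteq> \<infinity>" by auto
  have "d + B + P < \<infinity>" using fin Pf by (simp add: less_top[symmetric])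
  then have "c + A < \<infinity>" using eq by simp
  then have cf: "c \<noteq> \<infinity>" by auto
  obtain ra where ra: "a = ennreal ra" "ra \<ge> 0" using af by (cases a) auto
  obtain rb where rb: "b = ennreal rb" "rb \<ge> 0" using fin by (cases b) auto
  obtain rc where rc: "c = ennreal rc" "rc \<ge> 0" using cf by (cases c) auto
  obtain rd where rd: "d = ennreal rd" "rd \<ge> 0" using fin by (cases d) auto
  obtain rA where rA: "A = ennreal rA" "rA \<ge> 0" using fin by (cases A) auto
  obtain rB where rB: "B = ennreal rB" "rB \<ge> 0" using fin by (cases B) auto
  obtain rP where rP: "P = ennreal rP" "rP \<ge> 0" using Pf by (cases P) auto
  have "ennreal (ra + rA) \<le> ennreal (rb + rB + rP)" using le ra rb rA rB rP by (simp add: ennreal_plus)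
  then have 1: "ra + rA \<le> rb + rB + rP" using rb rB rP by (subst (asm) ennreal_le_iff) auto
  have "ennreal (rc + rA) = ennreal (rd + rB + rP)" using eq rc rd rA rB rP by (simp add: ennreal_plus)
  then have 2: "rc + rA = rd + rB + rP" using rc rd rA rB rP by (subst (asm) ennreal_inj) auto
  show ?thesis using ra rb rc rd 1 2 by simp
qed

lemma combine2:
  fixes a b c d A B X N Y :: ennreal
  assumes eq1: "a + A = b + B + X" and eq2: "c + A + N = d + B + Y"
    and le: "enn2ereal a - enn2ereal b \<le> enn2ereal c - enn2ereal d"
    and fin: "b \<noteq> \<infinity>" "d \<noteq> \<infinity>" "A \<noteq> \<infinity>" "B \<noteq> \<infinity>"
  shows "X \<le> Y"
proof (cases "Y = \<infinity>")
  case True then show ?thesis by simp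
next
  case Yf: False
  have "d + B + Y < \<infinity>" using fin Yf by (simp add: less_top[symmetric])
  then have "c + A + N < \<infinity>" using eq2 by simp
  then have cf: "c \<noteq> \<infinity>" and Nf: "N \<noteq> \<infinity>" by auto
  obtain rb where rb: "b = ennreal rb" "rb \<ge> 0" using fin by (cases b) auto
  obtain rc where rc: "c = ennreal rc" "rc \<ge> 0" using cf by (cases c) auto
  obtain rd where rd: "d = ennreal rd" "rd \<ge> 0" using fin by (cases d) auto
  have af: "a \<noteq> \<infinity>"
  proof
    assume "a = \<infinity>"
    then show False using le rb rc rd by (simp add: enn2ereal_ennreal)
  qed
  then have "a + A \<noteq> \<infinity>" using fin(3) by (simp add: ennreal_add_eq_top)
  then have "b + B + X \<noteq> \<infinity>" using eq1 by simp
  then have Xf: "X \<noteq> \<infinity>" by auto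
  obtain ra where ra: "a = ennreal ra" "ra \<ge> 0" using af by (cases a) auto
  obtain rA where rA: "A = ennreal rA" "rA \<ge> 0" using fin by (cases A) auto
  obtain rB where rB: "B = ennreal rB" "rB \<ge> 0" using fin by (cases B) auto
  obtain rX where rX: "X = ennreal rX" "rX \<ge> 0" using Xf by (cases X) auto
  obtain rY where rY: "Y = ennreal rY" "rY \<ge> 0" using Yf by (cases Y) auto
  obtain rN where rN: "N = ennreal rN" "rN \<ge> 0" using Nf by (cases N) auto
  have "ennreal (ra + rA) = ennreal (rb + rB + rX)" using eq1 ra rb rA rB rX by (simp add: ennreal_plus)
  then have 1: "ra + rA = rb + rB + rX" using ra rb rA rB rX by (subst (asm) ennreal_inj) auto
  have "ennreal (rc + rA + rN) = ennreal (rd + rB + rY)" using eq2 rc rd rA rB rY rN by (simp add: ennreal_plus)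
  then have 2: "rc + rA + rN = rd + rB + rY" using rc rd rA rB rY rN by (subst (asm) ennreal_inj) auto
  have 3: "ra - rb \<le> rc - rd" using le ra rb rc rd by (simp add: enn2ereal_ennreal)
  have "rX \<le> rY" using 1 2 3 rN by linarith
  then show ?thesis using rX rY by (simp add: ennreal_leI)
qed

context
  fixes q :: "real \<Rightarrow> real"
  assumes qm[measurable]: "q \<in> borel_measurable borel" and qmono: "mono_on {0<..<1} q"
begin

lemma emeas_Ioo1: "p \<le> 1 \<Longrightarrow> emeasure lborel {p<..<1::real} = ennreal (1 - p)"
  by simp

lemma IN_fin: assumes p: "0 < p" "p < 1" shows "IN {p<..<1} q \<noteq> \<infinity>"
proof -
  have "IN {p<..<1} q \<le> (\<integral>\<^sup>+t. ennreal (neg_part (q p)) * indicator {p<..<1} t \<partial>lborel)"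
    unfolding IN_def
  proof (intro nn_integral_mono)
    fix t
    show "ennreal (neg_part (q t)) * indicator {p<..<1} t \<le> ennreal (neg_part (q p)) * indicator {p<..<1} t"
    proof (cases "t \<in> {p<..<1}")
      case True
      then have "q p \<le> q t" using p by (intro mono_onD[OF qmono]) auto
      then show ?thesis using True by (auto simp: neg_part_def intro!: ennreal_leI)
    qed simp
  qed
  also have "\<dots> = ennreal (neg_part (q p)) * ennreal (1 - p)"
    using p by (subst nn_integral_cmult_indicator) auto
  also have "\<dots> < \<infinity>" by (simp add: ennreal_mult_less_top)
  finally show ?thesis by simp
qed

lemma XP_sub: assumes "S \<subseteq> {0<..<1}" shows "XP S q w \<le> XP {0<..<1} q w"
  unfolding XP_def using assms
  by (intro nn_integral_mono mult_left_mono) (auto simp: indicator_def)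

lemma ID_S: assumes p: "0 < p" "p < 1"
  shows "IP {p<..<1} q + ennreal (neg_part w) * ennreal (1 - p) + XN {p<..<1} q w =
         IN {p<..<1} q + ennreal (pos_part w) * ennreal (1 - p) + XP {p<..<1} q w"
  using ID_gen[OF qm, of "{p<..<1}" w] p by simp

lemma XN_zero: assumes "\<And>t. t \<in> S \<Longrightarrow> w \<le> q t" shows "XN S q w = 0"
proof -
  have z: "(\<lambda>t. ennreal (neg_part (q t - w)) * indicator S t) = (\<lambda>t. 0)"
  proof (rule ext)
    fix t show "ennreal (neg_part (q t - w)) * indicator S t = 0"
      using assms[of t] by (cases "t \<in> S") (auto simp: neg_part_def)
  qed
  show ?thesis unfolding XN_def z by simp
qed

end

lemma up_iii_ii:
  fixes q r :: "real \<Rightarrow> real"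
  assumes qm[measurable]: "q \<in> borel_measurable borel" and qmono: "mono_on {0<..<1} q"
    and rm[measurable]: "r \<in> borel_measurable borel" and rmono: "mono_on {0<..<1} r"
    and H: "\<And>w. XP {0<..<1} q w \<le> XP {0<..<1} r w"
    and p: "0 < p" "p < 1"
  shows "ext_set_integral {p<..<1} q \<le> ext_set_integral {p<..<1} r"
proof -
  define w where "w = r p"
  define S where "S = {p<..<1::real}"
  have sub: "{p<..<1} \<subseteq> {0<..<1::real}" using p by auto
  have f1: "IN S q \<noteq> \<infinity>" unfolding S_def by (rule IN_fin[OF qm qmono p])
  have f2: "IN S r \<noteq> \<infinity>" unfolding S_def by (rule IN_fin[OF rm rmono p])
  define A where "A = ennreal (neg_part w) * ennreal (1 - p)"
  define B where "B = ennreal (pos_part w) * ennreal (1 - p)"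
  have IDq: "IP S q + A + XN S q w = IN S q + B + XP S q w"
    unfolding S_def A_def B_def by (rule ID_S[OF qm qmono p])
  have IDr: "IP S r + A + XN S r w = IN S r + B + XP S r w"
    unfolding S_def A_def B_def by (rule ID_S[OF rm rmono p])
  have XNr: "XN S r w = 0" unfolding S_def w_def
    by (rule XN_zero[OF rm rmono]) (use p in \<open>auto intro!: mono_onD[OF rmono]\<close>)
  have XPr: "XP S r w = XP {0<..<1} r w"
    unfolding XP_def S_def
  proof (intro nn_integral_cong)
    fix t
    show "ennreal (pos_part (r t - w)) * indicator {p<..<1} t = ennreal (pos_part (r t - w)) * indicator {0<..<1} t"
    proof (cases "0 < t \<and> t \<le> p")
      case True
      then have "r t \<le> r p" using p by (intro mono_onD[OF rmono]) auto
      then show ?thesis using True by (simp add: pos_part_def w_def indicator_def)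
    next
      case False
      then show ?thesis using p by (auto simp: indicator_def)
    qed
  qed
  have le: "IP S q + A \<le> IN S q + B + XP {0<..<1} r w"
  proof -
    have "IP S q + A \<le> IP S q + A + XN S q w" by simp
    also have "\<dots> = IN S q + B + XP S q w" by (rule IDq)
    also have "\<dots> \<le> IN S q + B + XP {0<..<1} q w"
      using sub by (intro add_left_mono XP_sub[OF qm qmono]) (simp add: S_def)
    also have "\<dots> \<le> IN S q + B + XP {0<..<1} r w"
      by (intro add_left_mono H)
    finally show ?thesis .
  qed
  have eq: "IP S r + A = IN S r + B + XP {0<..<1} r w"
    using IDr unfolding XNr XPr by simp
  show ?thesis
    unfolding ext_set_integral_IP S_def[symmetric]
    by (rule combine1[OF le eq])
       (use f1 f2 in \<open>auto simp: A_def B_def ennreal_mult_eq_top_iff\<close>)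
qed

lemma up_ii_iii_step:
  fixes q r :: "real \<Rightarrow> real"
  assumes qm[measurable]: "q \<in> borel_measurable borel" and qmono: "mono_on {0<..<1} q"
    and rm[measurable]: "r \<in> borel_measurable borel" and rmono: "mono_on {0<..<1} r"
    and H: "ext_set_integral {p<..<1} q \<le> ext_set_integral {p<..<1} r"
    and p: "0 < p" "p < 1"
    and qw: "\<And>t. t \<in> {p<..<1} \<Longrightarrow> w \<le> q t"
  shows "XP {p<..<1} q w \<le> XP {0<..<1} r w"
proof -
  define S where "S = {p<..<1::real}"
  have sub: "{p<..<1} \<subseteq> {0<..<1::real}" using p by auto
  have f1: "IN S q \<noteq> \<infinity>" unfolding S_def by (rule IN_fin[OF qm qmono p])
  have f2: "IN S r \<noteq> \<infinity>" unfolding S_def by (rule IN_fin[OF rm rmono p])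
  define A where "A = ennreal (neg_part w) * ennreal (1 - p)"
  define B where "B = ennreal (pos_part w) * ennreal (1 - p)"
  have IDq: "IP S q + A + XN S q w = IN S q + B + XP S q w"
    unfolding S_def A_def B_def by (rule ID_S[OF qm qmono p])
  have IDr: "IP S r + A + XN S r w = IN S r + B + XP S r w"
    unfolding S_def A_def B_def by (rule ID_S[OF rm rmono p])
  have XNq: "XN S q w = 0" unfolding S_def by (rule XN_zero[OF qm qmono qw])
  have eq1: "IP S q + A = IN S q + B + XP S q w" using IDq unfolding XNq by simp
  have "XP S q w \<le> XP S r w"
    by (rule combine2[OF eq1 IDr H[unfolded ext_set_integral_IP S_def[symmetric]]])
       (use f1 f2 in \<open>auto simp: A_def B_def ennreal_mult_eq_top_iff\<close>)
  also have "\<dots> \<le> XP {0<..<1} r w" unfolding S_def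
    by (rule XP_sub[OF rm rmono sub])
  finally show ?thesis unfolding S_def .
qed

lemma up_ii_iii:
  fixes q r :: "real \<Rightarrow> real"
  assumes qm[measurable]: "q \<in> borel_measurable borel" and qmono: "mono_on {0<..<1} q"
    and rm[measurable]: "r \<in> borel_measurable borel" and rmono: "mono_on {0<..<1} r"
    and H: "\<forall>p\<in>{0<..<1}. ext_set_integral {p<..<1} q \<le> ext_set_integral {p<..<1} r"
  shows "XP {0<..<1} q w \<le> XP {0<..<1} r w"
proof -
  define T where "T = {t\<in>{0<..<1::real}. q t < w}"
  define s where "s = (if T = {} then 0 else Sup T)"
  have bddT: "bdd_above T" unfolding T_def by (auto intro: bdd_aboveI[of _ 1])
  have s0: "0 \<le> s"
  proof (cases "T = {}")
    case False
    then obtain t where "t \<in> T" by auto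
    then have "t \<le> Sup T" by (intro cSup_upper bddT)
    then show ?thesis using False \<open>t \<in> T\<close> unfolding s_def T_def by auto
  qed (simp add: s_def)
  have s1: "s \<le> 1"
  proof (cases "T = {}")
    case False
    then show ?thesis unfolding s_def by (auto intro!: cSup_least simp: T_def)
  qed (simp add: s_def)
  have below: "q t < w" if "t \<in> {0<..<1}" "t < s" for t
  proof -
    have ne: "T \<noteq> {}" using that s0 by (auto simp: s_def)
    then have "t < Sup T" using that by (simp add: s_def)
    then obtain p where p: "p \<in> T" "t < p" using less_cSup_iff[OF ne bddT] by auto
    then have "q t \<le> q p" using that by (intro mono_onD[OF qmono]) (auto simp: T_def)
    then show ?thesis using p by (auto simp: T_def)
  qed
  have above: "w \<le> q t" if "t \<in> {0<..<1}" "s < t" for t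
  proof (rule ccontr)
    assume "\<not> w \<le> q t"
    then have tT: "t \<in> T" using that by (auto simp: T_def)
    then have "T \<noteq> {}" by auto
    then have "t \<le> s" using cSup_upper[OF tT bddT] by (simp add: s_def)
    then show False using that by simp
  qed
  show ?thesis
  proof (cases "s = 1")
    case True
    have z: "(\<lambda>t. ennreal (pos_part (q t - w)) * indicator {0<..<1} t) = (\<lambda>t. 0)"
    proof (rule ext)
      fix t show "ennreal (pos_part (q t - w)) * indicator {0<..<1} t = 0"
        using below[of t] True by (cases "t \<in> {0<..<1}") (auto simp: pos_part_def)
    qed
    show ?thesis unfolding XP_def z by simp
  next
    case False
    then have s1': "s < 1" using s1 by simp
    have ae: "XP {0<..<1} q w = XP {s<..<1} q w"
      unfolding XP_def
    proof (rule nn_integral_cong_AE)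
      show "AE t in lborel. ennreal (pos_part (q t - w)) * indicator {0<..<1} t =
                            ennreal (pos_part (q t - w)) * indicator {s<..<1} t"
        using AE_lborel_singleton[of s]
      proof eventually_elim
        case (elim t)
        show ?case
        proof (cases "t \<in> {0<..<1} \<and> t < s")
          case True
          then show ?thesis using below[of t] by (auto simp: pos_part_def)
        next
          case False
          then show ?thesis using elim s0 by (auto simp: indicator_def)
        qed
      qed
    qed
    define sn where "sn n = s + (1 - s) / (real n + 2)" for n :: nat
    have sn_gt: "s < sn n" for n unfolding sn_def using s1' by simp
    have sn_lt: "sn n < 1" for n
    proof -
      have "(1 - s) / (real n + 2) < (1 - s) / 1"
        by (rule divide_strict_left_mono) (use s1' in auto)
      then have "(1 - s) / (real n + 2) < 1 - s" by simp
      then show ?thesis unfolding sn_def by simp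
    qed
    have sn_dec: "sn (Suc n) \<le> sn n" for n
      unfolding sn_def using s1' by (intro add_left_mono divide_left_mono) auto
    have stepn: "XP {sn n<..<1} q w \<le> XP {0<..<1} r w" for n
    proof (rule up_ii_iii_step[OF qm qmono rm rmono])
      show "0 < sn n" "sn n < 1" using sn_gt[of n] s0 sn_lt[of n] by auto
      then show "ext_set_integral {sn n<..<1} q \<le> ext_set_integral {sn n<..<1} r" using H by auto
      fix t assume "t \<in> {sn n<..<1}"
      then show "w \<le> q t" using sn_gt[of n] s0 by (intro above) auto
    qed
    define F where "F n t = ennreal (pos_part (q t - w)) * indicator {sn n<..<1} t" for n t
    have incF: "incseq F"
    proof (rule incseq_SucI, rule le_funI)
      fix n t show "F n t \<le> F (Suc n) t"
        unfolding F_def using sn_dec[of n] by (intro mult_left_mono) (auto simp: indicator_def)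
    qed
    have supF: "(SUP n. F n t) = ennreal (pos_part (q t - w)) * indicator {s<..<1} t" for t
    proof (cases "t \<in> {s<..<1}")
      case True
      obtain N :: nat where N: "(1 - s) / (t - s) < real N" using reals_Archimedean2 by blast
      have ts: "t - s > 0" using True by simp
      have "(1 - s) < real N * (t - s)" using N ts by (simp add: field_simps)
      also have "\<dots> \<le> (real N + 2) * (t - s)" using ts by (intro mult_right_mono) auto
      finally have "(1 - s) / (real N + 2) < t - s" by (simp add: field_simps)
      then have tN: "t \<in> {sn N<..<1}" using True unfolding sn_def by auto
      show ?thesis
      proof (rule antisym)
        show "(SUP n. F n t) \<le> ennreal (pos_part (q t - w)) * indicator {s<..<1} t"
          using True by (intro SUP_least) (auto simp: F_def indicator_def)
        have "ennreal (pos_part (q t - w)) * indicator {s<..<1} t = F N t"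
          using True tN by (simp add: F_def)
        also have "\<dots> \<le> (SUP n. F n t)" by (rule SUP_upper) simp
        finally show "ennreal (pos_part (q t - w)) * indicator {s<..<1} t \<le> (SUP n. F n t)" .
      qed
    next
      case False
      then have "F n t = 0" for n using sn_gt[of n] by (auto simp: F_def indicator_def)
      then show ?thesis using False by simp
    qed
    have "XP {s<..<1} q w = (\<integral>\<^sup>+t. (SUP n. F n t) \<partial>lborel)"
      unfolding XP_def supF ..
    also have "\<dots> = (SUP n. \<integral>\<^sup>+t. F n t \<partial>lborel)"
      by (rule nn_integral_monotone_convergence_SUP[OF incF]) (unfold F_def, measurable)
    also have "\<dots> \<le> XP {0<..<1} r w"
      using stepn by (intro SUP_least) (simp add: F_def XP_def)
    finally show ?thesis unfolding ae .
  qed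
qed

lemma D_up:
  fixes q r :: "real \<Rightarrow> real"
  assumes qm[measurable]: "q \<in> borel_measurable borel" and qmono: "mono_on {0<..<1} q"
    and rm[measurable]: "r \<in> borel_measurable borel" and rmono: "mono_on {0<..<1} r"
  shows "(\<forall>p\<in>{0<..<1}. ext_set_integral {p<..<1} q \<le> ext_set_integral {p<..<1} r) \<longleftrightarrow>
         (\<forall>w. XP {0<..<1} q w \<le> XP {0<..<1} r w)"
  using up_ii_iii[OF qm qmono rm rmono] up_iii_ii[OF qm qmono rm rmono] by auto

lemma refl_int:
  fixes G :: "real \<Rightarrow> ennreal"
  assumes [measurable]: "G \<in> borel_measurable borel"
  shows "(\<integral>\<^sup>+t. G (1 - t) \<partial>lborel) = (\<integral>\<^sup>+t. G t \<partial>lborel)"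
  using nn_integral_real_affine[of G "-1" 1] by simp

lemma IP_fin:
  fixes q :: "real \<Rightarrow> real"
  assumes qm[measurable]: "q \<in> borel_measurable borel" and qmono: "mono_on {0<..<1} q"
    and p: "0 < p" "p < 1"
  shows "IP {0<..<p} q \<noteq> \<infinity>"
proof -
  have "IP {0<..<p} q \<le> (\<integral>\<^sup>+t. ennreal (pos_part (q p)) * indicator {0<..<p} t \<partial>lborel)"
    unfolding IP_def
  proof (intro nn_integral_mono)
    fix t
    show "ennreal (pos_part (q t)) * indicator {0<..<p} t \<le> ennreal (pos_part (q p)) * indicator {0<..<p} t"
    proof (cases "t \<in> {0<..<p}")
      case True
      then have "q t \<le> q p" using p by (intro mono_onD[OF qmono]) auto
      then show ?thesis using True by (auto simp: pos_part_def intro!: ennreal_leI)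
    qed simp
  qed
  also have "\<dots> = ennreal (pos_part (q p)) * ennreal p"
    using p by (subst nn_integral_cmult_indicator) auto
  also have "\<dots> < \<infinity>" by (simp add: ennreal_mult_less_top)
  finally show ?thesis by simp
qed

lemma neg_swap:
  fixes a b c d :: ennreal
  assumes "b \<noteq> \<infinity>" "d \<noteq> \<infinity>"
  shows "(enn2ereal a - enn2ereal b \<le> enn2ereal c - enn2ereal d) \<longleftrightarrow>
         (enn2ereal d - enn2ereal c \<le> enn2ereal b - enn2ereal a)"
proof -
  obtain rb where rb: "b = ennreal rb" "rb \<ge> 0" using assms by (cases b) auto
  obtain rd where rd: "d = ennreal rd" "rd \<ge> 0" using assms by (cases d) auto
  show ?thesis
  proof (cases "a = \<infinity>"; cases "c = \<infinity>")
    assume "a = \<infinity>" "c = \<infinity>" then show ?thesis using rb rd by (simp add: enn2ereal_ennreal)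
  next
    assume "a = \<infinity>" "c \<noteq> \<infinity>"
    then obtain rc where "c = ennreal rc" "rc \<ge> 0" by (cases c) auto
    then show ?thesis using rb rd \<open>a = \<infinity>\<close> by (simp add: enn2ereal_ennreal)
  next
    assume "a \<noteq> \<infinity>" "c = \<infinity>"
    then obtain ra where "a = ennreal ra" "ra \<ge> 0" by (cases a) auto
    then show ?thesis using rb rd \<open>c = \<infinity>\<close> by (simp add: enn2ereal_ennreal)
  next
    assume "a \<noteq> \<infinity>" "c \<noteq> \<infinity>"
    then obtain ra rc where "a = ennreal ra" "ra \<ge> 0" "c = ennreal rc" "rc \<ge> 0"
      by (cases a; cases c) auto
    then show ?thesis using rb rd by (simp add: enn2ereal_ennreal) arith
  qed
qed

context
  fixes q :: "real \<Rightarrow> real"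
  assumes qm[measurable]: "q \<in> borel_measurable borel" and qmono: "mono_on {0<..<1} q"
begin

lemma refl_meas: "(\<lambda>t. - q (1 - t)) \<in> borel_measurable borel" by measurable

lemma refl_mono: "mono_on {0<..<1} (\<lambda>t. - q (1 - t))"
  by (rule mono_onI) (auto intro!: mono_onD[OF qmono])

lemma refl_IP: "p < 1 \<Longrightarrow> IP {p<..<1} (\<lambda>t. - q (1 - t)) = IN {0<..<1 - p} q"
proof -
  have "IP {p<..<1} (\<lambda>t. - q (1 - t)) = (\<integral>\<^sup>+t. (\<lambda>x. ennreal (neg_part (q x)) * indicator {0<..<1 - p} x) (1 - t) \<partial>lborel)"
    unfolding IP_def by (intro nn_integral_cong) (auto simp: pos_part_def neg_part_def indicator_def)
  also have "\<dots> = IN {0<..<1 - p} q" unfolding IN_def by (rule refl_int) measurable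
  finally show "IP {p<..<1} (\<lambda>t. - q (1 - t)) = IN {0<..<1 - p} q" .
qed

lemma refl_IN: "p < 1 \<Longrightarrow> IN {p<..<1} (\<lambda>t. - q (1 - t)) = IP {0<..<1 - p} q"
proof -
  have "IN {p<..<1} (\<lambda>t. - q (1 - t)) = (\<integral>\<^sup>+t. (\<lambda>x. ennreal (pos_part (q x)) * indicator {0<..<1 - p} x) (1 - t) \<partial>lborel)"
    unfolding IN_def by (intro nn_integral_cong) (auto simp: pos_part_def neg_part_def indicator_def)
  also have "\<dots> = IP {0<..<1 - p} q" unfolding IP_def by (rule refl_int) measurable
  finally show "IN {p<..<1} (\<lambda>t. - q (1 - t)) = IP {0<..<1 - p} q" .
qed

lemma refl_XP: "XP {0<..<1} (\<lambda>t. - q (1 - t)) w = XN {0<..<1} q (- w)"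
proof -
  have "XP {0<..<1} (\<lambda>t. - q (1 - t)) w = (\<integral>\<^sup>+t. (\<lambda>x. ennreal (neg_part (q x - - w)) * indicator {0<..<1} x) (1 - t) \<partial>lborel)"
    unfolding XP_def by (intro nn_integral_cong) (auto simp: pos_part_def neg_part_def indicator_def)
  also have "\<dots> = XN {0<..<1} q (- w)" unfolding XN_def by (rule refl_int) measurable
  finally show ?thesis .
qed

end

lemma D_low:
  fixes q r :: "real \<Rightarrow> real"
  assumes qm[measurable]: "q \<in> borel_measurable borel" and qmono: "mono_on {0<..<1} q"
    and rm[measurable]: "r \<in> borel_measurable borel" and rmono: "mono_on {0<..<1} r"
  shows "(\<forall>p\<in>{0<..<1}. ext_set_integral {0<..<p} q \<ge> ext_set_integral {0<..<p} r) \<longleftrightarrow>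
         (\<forall>w. XN {0<..<1} q w \<le> XN {0<..<1} r w)"
proof -
  let ?q = "\<lambda>t. - q (1 - t)" and ?r = "\<lambda>t. - r (1 - t)"
  have U: "(\<forall>p\<in>{0<..<1}. ext_set_integral {p<..<1} ?q \<le> ext_set_integral {p<..<1} ?r) \<longleftrightarrow>
         (\<forall>w. XP {0<..<1} ?q w \<le> XP {0<..<1} ?r w)"
    by (rule D_up[OF refl_meas[OF qm qmono] refl_mono[OF qm qmono] refl_meas[OF rm rmono] refl_mono[OF rm rmono]])
  have R: "(\<forall>w. XP {0<..<1} ?q w \<le> XP {0<..<1} ?r w) \<longleftrightarrow> (\<forall>w. XN {0<..<1} q w \<le> XN {0<..<1} r w)"
    unfolding refl_XP[OF qm qmono] refl_XP[OF rm rmono]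
    by (metis minus_minus)
  have E: "ext_set_integral {p<..<1} ?q \<le> ext_set_integral {p<..<1} ?r \<longleftrightarrow>
           ext_set_integral {0<..<1 - p} q \<ge> ext_set_integral {0<..<1 - p} r" if p: "p \<in> {0<..<1}" for p
  proof -
    have p1: "0 < 1 - p" "1 - p < 1" using p by auto
    show ?thesis
      unfolding ext_set_integral_IP
      using p refl_IP[OF qm qmono, of p] refl_IN[OF qm qmono, of p] refl_IP[OF rm rmono, of p] refl_IN[OF rm rmono, of p]
        neg_swap[OF IP_fin[OF qm qmono p1] IP_fin[OF rm rmono p1]]
      by simp
  qed
  have L: "(\<forall>p\<in>{0<..<1}. ext_set_integral {p<..<1} ?q \<le> ext_set_integral {p<..<1} ?r) \<longleftrightarrow>
        (\<forall>p\<in>{0<..<1}. ext_set_integral {0<..<p} q \<ge> ext_set_integral {0<..<p} r)"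
  proof
    assume A: "\<forall>p\<in>{0<..<1}. ext_set_integral {p<..<1} ?q \<le> ext_set_integral {p<..<1} ?r"
    show "\<forall>p\<in>{0<..<1}. ext_set_integral {0<..<p} q \<ge> ext_set_integral {0<..<p} r"
    proof
      fix p :: real assume p: "p \<in> {0<..<1}"
      then have p': "1 - p \<in> {0<..<1}" by auto
      show "ext_set_integral {0<..<p} q \<ge> ext_set_integral {0<..<p} r"
        using A p' E[OF p'] by simp
    qed
  next
    assume A: "\<forall>p\<in>{0<..<1}. ext_set_integral {0<..<p} q \<ge> ext_set_integral {0<..<p} r"
    show "\<forall>p\<in>{0<..<1}. ext_set_integral {p<..<1} ?q \<le> ext_set_integral {p<..<1} ?r"
    proof
      fix p :: real assume p: "p \<in> {0<..<1}"
      then have p': "1 - p \<in> {0<..<1}" by auto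
      show "ext_set_integral {p<..<1} ?q \<le> ext_set_integral {p<..<1} ?r"
        using A p' E[OF p] by simp
    qed
  qed
  show ?thesis using U R L by simp
qed

lemma ext_XN:
  fixes M :: "'a measure" and X :: "'a \<Rightarrow> real"
  assumes P: "prob_space M" and X: "X \<in> borel_measurable M"
  shows "ext_expectation M (\<lambda>\<omega>. neg_part (X \<omega> - w)) = enn2ereal (XN {0<..<1} (left_quantile M X) w)"
  unfolding XN_def
  by (subst ext_nonneg) (simp, subst lq_transfer[OF P X], measurable)

lemma ext_XP:
  fixes M :: "'a measure" and X :: "'a \<Rightarrow> real"
  assumes P: "prob_space M" and X: "X \<in> borel_measurable M"
  shows "ext_expectation M (\<lambda>\<omega>. pos_part (X \<omega> - w)) = enn2ereal (XP {0<..<1} (left_quantile M X) w)"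
  unfolding XP_def
  by (subst ext_nonneg) (simp, subst lq_transfer[OF P X], measurable)

lemma ii_iff_iii:
  fixes M :: "'a measure" and X Y :: "'a \<Rightarrow> real"
  assumes P: "prob_space M" and X: "X \<in> borel_measurable M" and Y: "Y \<in> borel_measurable M"
  shows "(\<forall>p\<in>{0<..<1::real}.
              ext_set_integral {0<..<p} (left_quantile M X) \<ge> ext_set_integral {0<..<p} (left_quantile M Y) \<and>
              ext_set_integral {p<..<1} (left_quantile M X) \<le> ext_set_integral {p<..<1} (left_quantile M Y))
     \<longleftrightarrow> (\<forall>w::real.
              ext_expectation M (\<lambda>\<omega>. neg_part (X \<omega> - w)) \<le> ext_expectation M (\<lambda>\<omega>. neg_part (Y \<omega> - w)) \<and>
              ext_expectation M (\<lambda>\<omega>. pos_part (X \<omega> - w)) \<le> ext_expectation M (\<lambda>\<omega>. pos_part (Y \<omega> - w)))"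
proof -
  have qm: "left_quantile M X \<in> borel_measurable borel" by (rule lq_meas[OF P X])
  have rm: "left_quantile M Y \<in> borel_measurable borel" by (rule lq_meas[OF P Y])
  have qmono: "mono_on {0<..<1} (left_quantile M X)" by (rule lq_mono[OF P X])
  have rmono: "mono_on {0<..<1} (left_quantile M Y)" by (rule lq_mono[OF P Y])
  have iii: "(\<forall>w::real.
              ext_expectation M (\<lambda>\<omega>. neg_part (X \<omega> - w)) \<le> ext_expectation M (\<lambda>\<omega>. neg_part (Y \<omega> - w)) \<and>
              ext_expectation M (\<lambda>\<omega>. pos_part (X \<omega> - w)) \<le> ext_expectation M (\<lambda>\<omega>. pos_part (Y \<omega> - w)))
     \<longleftrightarrow> (\<forall>w. XN {0<..<1} (left_quantile M X) w \<le> XN {0<..<1} (left_quantile M Y) w) \<and>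
         (\<forall>w. XP {0<..<1} (left_quantile M X) w \<le> XP {0<..<1} (left_quantile M Y) w)"
    unfolding ext_XN[OF P X] ext_XN[OF P Y] ext_XP[OF P X] ext_XP[OF P Y]
    by (auto simp: less_eq_ennreal.rep_eq)
  show ?thesis
    unfolding iii D_low[OF qm qmono rm rmono, symmetric] D_up[OF qm qmono rm rmono, symmetric]
    by auto
qed

theorem theorem1:
  fixes M :: "'a measure" and X Y :: "'a \<Rightarrow> real"
  assumes "prob_space M"
    and "atomless M"
    and "X \<in> borel_measurable M"
    and "Y \<in> borel_measurable M"
  shows "(cx_le M X Y \<longleftrightarrow>
           (\<forall>p\<in>{0<..<1::real}.
              ext_set_integral {0<..<p} (left_quantile M X) \<ge> ext_set_integral {0<..<p} (left_quantile M Y) \<and>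
              ext_set_integral {p<..<1} (left_quantile M X) \<le> ext_set_integral {p<..<1} (left_quantile M Y)))
       \<and> (cx_le M X Y \<longleftrightarrow>
           (\<forall>w::real.
              ext_expectation M (\<lambda>\<omega>. neg_part (X \<omega> - w)) \<le> ext_expectation M (\<lambda>\<omega>. neg_part (Y \<omega> - w)) \<and>
              ext_expectation M (\<lambda>\<omega>. pos_part (X \<omega> - w)) \<le> ext_expectation M (\<lambda>\<omega>. pos_part (Y \<omega> - w))))"
  using i_iff_iii[OF assms(1,3,4)] ii_iff_iii[OF assms(1,3,4)] by simp

end
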